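(* Let $d\ge 2$ and consider Hamiltonians (Hermitian operators) $H$ on $\mathbb{C}^d$ with fixed orthonormal (incoherent) basis $\{\ket{i}\}_{i=0}^{d-1}$. Then \[ \max_{\|H\|_{2}\leq 1} C_{\mathrm{gen}}(H)=\max_{\boldsymbol{p}}\sqrt{2f(\boldsymbol{p})}, \] where the maximum on the left is over all Hamiltonians on $\mathbb{C}^d$ with Hilbert–Schmidt norm $\|H\|_2=\sqrt{\mathrm{Tr}[H^\dagger H]}\le 1$, and the maximum on the right is over all probability distributions $\boldsymbol{p}=(p_0,\ldots,p_{d-1})$ on $d$ outcomes.
   Context: The dephasing map is $\Delta(\rho)=\sum_{i}\ket{i}\!\bra{i}\rho\ket{i}\!\bra{i}$. The relative entropy of coherence of a state $\rho$ is $C_\mathrm{r}(\rho)=S(\Delta(\rho))-S(\rho)$, where $S(\rho)=-\mathrm{Tr}[\rho\log_2\rho]$. The coherence generating capacity of a Hamiltonian $H$ is \[ C_{\mathrm{gen}}(H)=\max_{\rho}\left.\frac{d}{dt}C_{\mathrm{r}}\big(e^{-iHt}\rho e^{iHt}\big)\right|_{t=0}, \] the maximum over all density matrices $\rho$ on $\mathbb{C}^d$. For a probability distribution $\boldsymbol{p}$, $f(\boldsymbol{p})$ is the variance of the surprisal: \[ f(\boldsymbol{p})=\sum_{i}p_{i}\left(-\log_{2}p_{i}\right)^{2}-\Big[\sum_{i}p_{i}\left(-\log_{2}p_{i}\right)\Big]^{2} \] (with the convention $0\log_2 0=0$, $0(\log_2 0)^2=0$). *)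

theory Defs
  imports "HOL-Analysis.Analysis" "Jordan_Normal_Form.Jordan_Normal_Form"
begin

text \<open>Square complex matrices of size d are JNF matrices in carrier_mat d d.
  The incoherent basis is the standard basis indexed by 0..d-1.\<close>

definition adj :: "complex mat \<Rightarrow> complex mat" where
  "adj A = mat (dim_col A) (dim_row A) (\<lambda>(i,j). cnj (A $$ (j,i)))"

definition mtrace :: "complex mat \<Rightarrow> complex" where
  "mtrace A = (\<Sum>i<dim_row A. A $$ (i,i))"

definition hermitian :: "nat \<Rightarrow> complex mat \<Rightarrow> bool" where
  "hermitian d H \<longleftrightarrow> H \<in> carrier_mat d d \<and> adj H = H"

definition hs_norm :: "complex mat \<Rightarrow> real" where
  "hs_norm H = sqrt (Re (mtrace (adj H * H)))"

definition density :: "nat \<Rightarrow> complex mat \<Rightarrow> bool" where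
  "density d \<rho> \<longleftrightarrow> hermitian d \<rho> \<and>
     (\<forall>v \<in> carrier_vec d. 0 \<le> Re (conjugate v \<bullet> (\<rho> *\<^sub>v v))) \<and> mtrace \<rho> = 1"

definition mexp :: "complex mat \<Rightarrow> complex mat" where
  "mexp A = mat (dim_row A) (dim_col A) (\<lambda>(i,j). \<Sum>k. (A ^\<^sub>m k) $$ (i,j) / of_nat (fact k))"

definition eigvals :: "complex mat \<Rightarrow> complex list" where
  "eigvals A = (SOME as. char_poly A = (\<Prod>a\<leftarrow>as. [:- a, 1:]) \<and> length as = dim_row A)"

text \<open>Von Neumann entropy S(rho) = - Tr[rho log2 rho] = - sum of lambda log2 lambda over eigenvalues
  (note: 0 * log 2 0 = 0 in Isabelle, matching the convention 0 log 0 = 0).\<close>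
definition vn_entropy :: "complex mat \<Rightarrow> real" where
  "vn_entropy \<rho> = - (\<Sum>a\<leftarrow>eigvals \<rho>. Re a * log 2 (Re a))"

definition dephase :: "complex mat \<Rightarrow> complex mat" where
  "dephase \<rho> = mat (dim_row \<rho>) (dim_col \<rho>) (\<lambda>(i,j). if i = j then \<rho> $$ (i,i) else 0)"

definition rel_coh :: "complex mat \<Rightarrow> real" where
  "rel_coh \<rho> = vn_entropy (dephase \<rho>) - vn_entropy \<rho>"

definition evolve :: "complex mat \<Rightarrow> real \<Rightarrow> complex mat \<Rightarrow> complex mat" where
  "evolve H t \<rho> = mexp ((- \<i> * of_real t) \<cdot>\<^sub>m H) * \<rho> * mexp ((\<i> * of_real t) \<cdot>\<^sub>m H)"

text \<open>Coherence generating capacity: the supremum (attained, by the paper) over density matrices of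
  the derivative at t = 0 of C_r along the unitary evolution.\<close>
definition Cgen :: "nat \<Rightarrow> complex mat \<Rightarrow> real" where
  "Cgen d H = Sup {D. \<exists>\<rho>. density d \<rho> \<and>
       ((\<lambda>t. rel_coh (evolve H t \<rho>)) has_real_derivative D) (at 0)}"

definition prob_dist :: "nat \<Rightarrow> (nat \<Rightarrow> real) \<Rightarrow> bool" where
  "prob_dist d p \<longleftrightarrow> (\<forall>i<d. 0 \<le> p i) \<and> (\<Sum>i<d. p i) = 1"

definition surprisal_var :: "nat \<Rightarrow> (nat \<Rightarrow> real) \<Rightarrow> real" where
  "surprisal_var d p = (\<Sum>i<d. p i * (- log 2 (p i))^2) - (\<Sum>i<d. p i * (- log 2 (p i)))^2"

end

theory Submission
  imports Defs "HOL-Real_Asymp.Real_Asymp"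
begin


lemma mult_entry:
  assumes "A \<in> carrier_mat n m" "B \<in> carrier_mat m p" "i < n" "j < p"
  shows "(A * B) $$ (i,j) = (\<Sum>k<m. A $$ (i,k) * B $$ (k,j))"
  using assms by (auto simp: scalar_prod_def atLeast0LessThan intro!: sum.cong)

lemma pow_Suc_left:
  assumes "A \<in> carrier_mat n n"
  shows "A ^\<^sub>m Suc k = A * A ^\<^sub>m k"
proof (induct k)
  case 0 then show ?case using assms by simp
next
  case (Suc k)
  have "A ^\<^sub>m Suc (Suc k) = (A * A ^\<^sub>m k) * A" using Suc by simp
  also have "\<dots> = A * (A ^\<^sub>m k * A)" using assms by (simp add: assoc_mult_mat[of _ n n _ n _ n])
  finally show ?case by simp
qed

lemma pow_smult:
  fixes A :: "complex mat"
  assumes "A \<in> carrier_mat n n"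
  shows "(c \<cdot>\<^sub>m A) ^\<^sub>m k = c^k \<cdot>\<^sub>m (A ^\<^sub>m k)"
proof (induct k)
  case 0 then show ?case using assms by (auto intro!: eq_matI)
next
  case (Suc k)
  have "(c \<cdot>\<^sub>m A) ^\<^sub>m (Suc k) = (c^k \<cdot>\<^sub>m A ^\<^sub>m k) * (c \<cdot>\<^sub>m A)" using Suc by simp
  also have "\<dots> = c^k \<cdot>\<^sub>m (c \<cdot>\<^sub>m (A ^\<^sub>m k * A))"
    using assms by (simp add: mult_smult_assoc_mat[of "A ^\<^sub>m k" n n "c \<cdot>\<^sub>m A" n] mult_smult_distrib[of "A ^\<^sub>m k" n n A n])
  also have "\<dots> = c^Suc k \<cdot>\<^sub>m (A ^\<^sub>m Suc k)" by (rule eq_matI) (use assms in auto)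
  finally show ?case .
qed


definition bnd :: "complex mat \<Rightarrow> nat \<Rightarrow> real" where
  "bnd A n = (\<Sum>i<n. \<Sum>j<n. cmod (A $$ (i,j)))"

lemma bnd_nonneg: "0 \<le> bnd A n"
  unfolding bnd_def by (intro sum_nonneg) auto

lemma col_le_bnd:
  assumes "j < n"
  shows "(\<Sum>m<n. cmod (A $$ (m,j))) \<le> bnd A n"
  unfolding bnd_def
proof (rule sum_mono)
  fix m assume "m \<in> {..<n}"
  show "cmod (A $$ (m, j)) \<le> (\<Sum>j<n. cmod (A $$ (m, j)))"
    using assms by (intro member_le_sum) auto
qed

lemma pow_entry_bound:
  assumes A: "A \<in> carrier_mat n n"
  shows "i < n \<Longrightarrow> j < n \<Longrightarrow> cmod ((A ^\<^sub>m k) $$ (i,j)) \<le> (bnd A n)^k"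
proof (induct k arbitrary: i j)
  case 0 then show ?case using A by auto
next
  case (Suc k)
  have "(A ^\<^sub>m Suc k) $$ (i,j) = (A ^\<^sub>m k * A) $$ (i,j)" by simp
  also have "\<dots> = (\<Sum>m<n. (A ^\<^sub>m k) $$ (i,m) * A $$ (m,j))"
    by (rule mult_entry[where m=n]) (use A Suc.prems in auto)
  finally have "(A ^\<^sub>m Suc k) $$ (i,j) = (\<Sum>m<n. (A ^\<^sub>m k) $$ (i,m) * A $$ (m,j))" .
  then have "cmod ((A ^\<^sub>m Suc k) $$ (i,j)) \<le> (\<Sum>m<n. cmod ((A ^\<^sub>m k) $$ (i,m)) * cmod (A $$ (m,j)))"
    by (metis (no_types, lifting) norm_mult norm_sum sum.cong)
  also have "\<dots> \<le> (\<Sum>m<n. (bnd A n)^k * cmod (A $$ (m,j)))"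
    using Suc by (intro sum_mono mult_right_mono) auto
  also have "\<dots> = (bnd A n)^k * (\<Sum>m<n. cmod (A $$ (m,j)))" by (simp add: sum_distrib_left)
  also have "\<dots> \<le> (bnd A n)^k * bnd A n"
    using col_le_bnd[OF Suc.prems(2)] bnd_nonneg by (intro mult_left_mono) auto
  finally show ?case by (simp add: mult.commute)
qed

lemma fact_Suc_div: "of_nat (Suc k) * (x / of_nat (fact (Suc k))) = x / (of_nat (fact k) :: complex)"
proof -
  have "(of_nat (fact (Suc k)) :: complex) = of_nat (Suc k) * of_nat (fact k)"
    by (metis fact_Suc of_nat_id of_nat_mult)
  moreover have "(of_nat (fact k) :: complex) \<noteq> 0" by simp
  ultimately show ?thesis by (simp del: of_nat_Suc)
qed

definition ecoef :: "complex mat \<Rightarrow> nat \<Rightarrow> nat \<Rightarrow> nat \<Rightarrow> complex" where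
  "ecoef A i j k = (A ^\<^sub>m k) $$ (i,j) / of_nat (fact k)"

definition eser :: "complex mat \<Rightarrow> nat \<Rightarrow> nat \<Rightarrow> complex \<Rightarrow> complex" where
  "eser A i j z = (\<Sum>k. ecoef A i j k * z ^ k)"

lemma eser_summable:
  assumes A: "A \<in> carrier_mat n n" and ij: "i < n" "j < n"
  shows "summable (\<lambda>k. ecoef A i j k * z ^ k)"
proof (rule summable_comparison_test')
  show "summable (\<lambda>k. inverse (fact k) * (bnd A n * cmod z) ^ k)" by (rule summable_exp)
  fix k :: nat
  have "norm (ecoef A i j k * z ^ k) = cmod ((A ^\<^sub>m k) $$ (i,j)) * cmod z ^ k / fact k"
    unfolding ecoef_def by (simp add: norm_mult norm_divide norm_power)
  also have "\<dots> \<le> (bnd A n)^k * cmod z ^ k / fact k"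
    using pow_entry_bound[OF A ij] by (intro divide_right_mono mult_right_mono) auto
  also have "\<dots> = inverse (fact k) * (bnd A n * cmod z) ^ k"
    by (simp add: power_mult_distrib field_simps)
  finally show "norm (ecoef A i j k * z ^ k) \<le> inverse (fact k) * (bnd A n * cmod z) ^ k" .
qed

lemma diffs_ecoef_left:
  assumes A: "A \<in> carrier_mat n n" and ij: "i < n" "j < n"
  shows "diffs (ecoef A i j) k = (\<Sum>m<n. A $$ (i,m) * ecoef A m j k)"
proof -
  have "(A ^\<^sub>m Suc k) $$ (i,j) = (A * A ^\<^sub>m k) $$ (i,j)" by (simp only: pow_Suc_left[OF A])
  also have "\<dots> = (\<Sum>m<n. A $$ (i,m) * (A ^\<^sub>m k) $$ (m,j))"
    by (rule mult_entry[where m=n]) (use A ij in auto)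
  finally have "(A ^\<^sub>m Suc k) $$ (i,j) = (\<Sum>m<n. A $$ (i,m) * (A ^\<^sub>m k) $$ (m,j))" .
  then show ?thesis
    unfolding diffs_def ecoef_def fact_Suc_div
    by (simp add: sum_divide_distrib del: of_nat_Suc)
qed

lemma diffs_ecoef_right:
  assumes A: "A \<in> carrier_mat n n" and ij: "i < n" "j < n"
  shows "diffs (ecoef A i j) k = (\<Sum>m<n. ecoef A i m k * A $$ (m,j))"
proof -
  have "(A ^\<^sub>m Suc k) $$ (i,j) = (A ^\<^sub>m k * A) $$ (i,j)" by simp
  also have "\<dots> = (\<Sum>m<n. (A ^\<^sub>m k) $$ (i,m) * A $$ (m,j))"
    by (rule mult_entry[where m=n]) (use A ij in auto)
  finally have "(A ^\<^sub>m Suc k) $$ (i,j) = (\<Sum>m<n. (A ^\<^sub>m k) $$ (i,m) * A $$ (m,j))" .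
  then show ?thesis
    unfolding diffs_def ecoef_def fact_Suc_div
    by (simp add: sum_divide_distrib del: of_nat_Suc)
qed


lemma eser_fun: "eser A i j = (\<lambda>z. \<Sum>k. ecoef A i j k * z ^ k)"
  by (rule ext) (simp add: eser_def)

lemma eser_deriv_left:
  assumes A: "A \<in> carrier_mat n n" and ij: "i < n" "j < n"
  shows "(eser A i j has_field_derivative (\<Sum>m<n. A $$ (i,m) * eser A m j z)) (at z)"
proof -
  have d: "(eser A i j has_field_derivative (\<Sum>k. diffs (ecoef A i j) k * z^k)) (at z)"
    unfolding eser_fun
    by (rule termdiffs_strong_converges_everywhere[OF eser_summable[OF A ij]])
  have "(\<Sum>k. diffs (ecoef A i j) k * z^k) = (\<Sum>k. \<Sum>m<n. A $$ (i,m) * (ecoef A m j k * z^k))"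
  proof -
    have "\<And>k. diffs (ecoef A i j) k * z^k = (\<Sum>m<n. A $$ (i,m) * (ecoef A m j k * z^k))"
      using diffs_ecoef_left[OF A ij] by (simp add: sum_distrib_right mult.assoc)
    then show ?thesis by simp
  qed
  also have "\<dots> = (\<Sum>m<n. \<Sum>k. A $$ (i,m) * (ecoef A m j k * z^k))"
    by (rule suminf_sum) (use A ij in \<open>auto intro!: summable_mult eser_summable\<close>)
  also have "\<dots> = (\<Sum>m<n. A $$ (i,m) * eser A m j z)"
    unfolding eser_def
    by (intro sum.cong refl suminf_mult eser_summable[OF A _ ij(2)]) auto
  finally show ?thesis using d by simp
qed

lemma eser_deriv_right:
  assumes A: "A \<in> carrier_mat n n" and ij: "i < n" "j < n"
  shows "(eser A i j has_field_derivative (\<Sum>m<n. eser A i m z * A $$ (m,j))) (at z)"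
proof -
  have d: "(eser A i j has_field_derivative (\<Sum>k. diffs (ecoef A i j) k * z^k)) (at z)"
    unfolding eser_fun
    by (rule termdiffs_strong_converges_everywhere[OF eser_summable[OF A ij]])
  have "(\<Sum>k. diffs (ecoef A i j) k * z^k) = (\<Sum>k. \<Sum>m<n. (ecoef A i m k * z^k) * A $$ (m,j))"
  proof -
    have "\<And>k. diffs (ecoef A i j) k * z^k = (\<Sum>m<n. (ecoef A i m k * z^k) * A $$ (m,j))"
      using diffs_ecoef_right[OF A ij] by (simp add: sum_distrib_right sum_distrib_left mult_ac)
    then show ?thesis by simp
  qed
  also have "\<dots> = (\<Sum>m<n. \<Sum>k. (ecoef A i m k * z^k) * A $$ (m,j))"
    by (rule suminf_sum) (use A ij in \<open>auto intro!: summable_mult2 eser_summable\<close>)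
  also have "\<dots> = (\<Sum>m<n. eser A i m z * A $$ (m,j))"
    unfolding eser_def
    by (intro sum.cong refl suminf_mult2[symmetric] eser_summable[OF A ij(1)]) auto
  finally show ?thesis using d by simp
qed

lemma eser_zero:
  assumes A: "A \<in> carrier_mat n n" and ij: "i < n" "j < n"
  shows "eser A i j 0 = (if i = j then 1 else 0)"
  unfolding eser_def using powser_zero[of "ecoef A i j"] A ij by (simp add: ecoef_def)

lemma eser_inv:
  assumes A: "A \<in> carrier_mat n n" and ij: "i < n" "j < n"
  shows "(\<Sum>m<n. eser A i m z * eser A m j (- z)) = (if i = j then 1 else 0)"
proof -
  define F where "F = (\<lambda>z. \<Sum>m<n. eser A i m z * eser A m j (- z))"
  have "(F has_field_derivative 0) (at z within UNIV)" for z
  proof -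
    have dm: "((\<lambda>w. eser A m j (- w)) has_field_derivative (\<Sum>l<n. A $$ (m,l) * eser A l j (- z)) * (-1)) (at z)"
      if "m < n" for m
      by (rule DERIV_chain2[OF eser_deriv_left[OF A that ij(2)]]) (auto intro!: derivative_eq_intros)
    have "(F has_field_derivative
       (\<Sum>m<n. (\<Sum>l<n. eser A i l z * A $$ (l,m)) * eser A m j (- z) +
           (\<Sum>l<n. A $$ (m,l) * eser A l j (- z)) * (-1) * eser A i m z)) (at z)"
      unfolding F_def
      by (intro DERIV_sum DERIV_mult eser_deriv_right[OF A ij(1)] dm) auto
    moreover have "(\<Sum>m<n. (\<Sum>l<n. eser A i l z * A $$ (l,m)) * eser A m j (- z) +
           (\<Sum>l<n. A $$ (m,l) * eser A l j (- z)) * (-1) * eser A i m z) = 0"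
    proof -
      have "(\<Sum>m<n. (\<Sum>l<n. eser A i l z * A $$ (l,m)) * eser A m j (- z))
          = (\<Sum>m<n. \<Sum>l<n. eser A i l z * A $$ (l,m) * eser A m j (- z))"
        by (simp add: sum_distrib_right)
      also have "\<dots> = (\<Sum>l<n. \<Sum>m<n. eser A i l z * A $$ (l,m) * eser A m j (- z))"
        by (rule sum.swap)
      also have "\<dots> = (\<Sum>m<n. (\<Sum>l<n. A $$ (m,l) * eser A l j (- z)) * eser A i m z)"
        by (simp add: sum_distrib_right sum_distrib_left ac_simps)
      finally show ?thesis by (simp add: sum_subtractf)
    qed
    ultimately show ?thesis by simp
  qed
  then obtain c where c: "\<forall>x\<in>UNIV. F x = c"
    using has_field_derivative_zero_constant[of UNIV F] by auto
  have "F 0 = (if i = j then 1 else 0)"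
    unfolding F_def using A ij by (simp add: eser_zero if_distrib[of "\<lambda>x. x * _"] cong: if_cong)
  moreover have "F z = F 0" using c by auto
  ultimately show ?thesis unfolding F_def by simp
qed


definition Emat :: "nat \<Rightarrow> complex mat \<Rightarrow> complex \<Rightarrow> complex mat" where
  "Emat d H z = mat d d (\<lambda>(i,j). eser H i j z)"

lemma Emat_carrier[simp]: "Emat d H z \<in> carrier_mat d d"
  unfolding Emat_def by simp

lemma Emat_dim[simp]: "dim_row (Emat d H z) = d" "dim_col (Emat d H z) = d"
  unfolding Emat_def by simp_all

lemma Emat_index[simp]: "i < d \<Longrightarrow> j < d \<Longrightarrow> Emat d H z $$ (i,j) = eser H i j z"
  unfolding Emat_def by simp

lemma mexp_smult:
  assumes H: "H \<in> carrier_mat d d"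
  shows "mexp (c \<cdot>\<^sub>m H) = Emat d H c"
proof (rule eq_matI)
  fix i j assume ij: "i < dim_row (Emat d H c)" "j < dim_col (Emat d H c)"
  then have ij': "i < d" "j < d" by auto
  have "mexp (c \<cdot>\<^sub>m H) $$ (i,j) = (\<Sum>k. ((c \<cdot>\<^sub>m H) ^\<^sub>m k) $$ (i,j) / of_nat (fact k))"
    unfolding mexp_def using H ij' by simp
  also have "\<dots> = (\<Sum>k. ecoef H i j k * c ^ k)"
    using H ij' by (simp add: pow_smult[OF H] ecoef_def mult.commute)
  also have "\<dots> = Emat d H c $$ (i,j)" using ij' by (simp add: eser_def)
  finally show "mexp (c \<cdot>\<^sub>m H) $$ (i,j) = Emat d H c $$ (i,j)" .
qed (use H in \<open>auto simp: mexp_def\<close>)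

lemma Emat_inv:
  assumes H: "H \<in> carrier_mat d d"
  shows "Emat d H z * Emat d H (- z) = 1\<^sub>m d"
proof (rule eq_matI)
  fix i j assume ij: "i < dim_row (1\<^sub>m d)" "j < dim_col (1\<^sub>m d)"
  then have ij': "i < d" "j < d" by auto
  have "(Emat d H z * Emat d H (- z)) $$ (i,j) = (\<Sum>m<d. Emat d H z $$ (i,m) * Emat d H (-z) $$ (m,j))"
    by (rule mult_entry) (use ij' in auto)
  also have "\<dots> = (\<Sum>m<d. eser H i m z * eser H m j (- z))"
    using ij' by (intro sum.cong) auto
  also have "\<dots> = 1\<^sub>m d $$ (i,j)" using eser_inv[OF H ij'] ij' by simp
  finally show "(Emat d H z * Emat d H (- z)) $$ (i,j) = 1\<^sub>m d $$ (i,j)" .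
qed auto

definition Um :: "nat \<Rightarrow> complex mat \<Rightarrow> real \<Rightarrow> complex mat" where
  "Um d H t = Emat d H (- \<i> * of_real t)"

definition Vm :: "nat \<Rightarrow> complex mat \<Rightarrow> real \<Rightarrow> complex mat" where
  "Vm d H t = Emat d H (\<i> * of_real t)"

lemma evolve_UV:
  assumes H: "H \<in> carrier_mat d d"
  shows "evolve H t \<rho> = Um d H t * \<rho> * Vm d H t"
  unfolding evolve_def Um_def Vm_def using H by (simp add: mexp_smult)

lemma UV_inv:
  assumes H: "H \<in> carrier_mat d d"
  shows "Um d H t * Vm d H t = 1\<^sub>m d" "Vm d H t * Um d H t = 1\<^sub>m d"
proof -
  show "Um d H t * Vm d H t = 1\<^sub>m d"
    using Emat_inv[OF H, of "- \<i> * of_real t"] unfolding Um_def Vm_def by simp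
  show "Vm d H t * Um d H t = 1\<^sub>m d"
    using Emat_inv[OF H, of "\<i> * of_real t"] unfolding Um_def Vm_def by simp
qed

lemma evolve_carrier:
  assumes H: "H \<in> carrier_mat d d" and r: "\<rho> \<in> carrier_mat d d"
  shows "evolve H t \<rho> \<in> carrier_mat d d"
  using evolve_UV[OF H] r by (simp add: Um_def Vm_def mult_carrier_mat[of _ d d _ d])

lemma evolve_char_poly:
  assumes H: "H \<in> carrier_mat d d" and r: "\<rho> \<in> carrier_mat d d"
  shows "char_poly (evolve H t \<rho>) = char_poly \<rho>"
proof (rule char_poly_similar)
  show "similar_mat (evolve H t \<rho>) \<rho>"
    unfolding similar_mat_def
  proof (intro exI)
    show "similar_mat_wit (evolve H t \<rho>) \<rho> (Um d H t) (Vm d H t)"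
      unfolding similar_mat_wit_def Let_def
      using evolve_carrier[OF H r, of t] UV_inv[OF H, of t] r evolve_UV[OF H, of t \<rho>]
      by (auto simp: Um_def Vm_def)
  qed
qed

lemma eigvals_cong:
  assumes "char_poly A = char_poly B" "dim_row A = dim_row B"
  shows "eigvals A = eigvals B"
  unfolding eigvals_def using assms by simp

lemma vn_entropy_evolve:
  assumes H: "H \<in> carrier_mat d d" and r: "\<rho> \<in> carrier_mat d d"
  shows "vn_entropy (evolve H t \<rho>) = vn_entropy \<rho>"
  unfolding vn_entropy_def
  using eigvals_cong[OF evolve_char_poly[OF H r, of t]] evolve_carrier[OF H r, of t] r by simp


lemma prod_list_mset_eq:
  assumes h: "mset xs = mset ys"
  shows "prod_list (map f xs) = (prod_list (map f ys) :: 'b :: comm_monoid_mult)"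
proof -
  have "prod_list (map f xs) = prod_mset (mset (map f xs))" by (simp only: prod_mset_prod_list)
  also have "\<dots> = prod_mset (image_mset f (mset xs))" by (simp only: mset_map)
  also have "\<dots> = prod_mset (image_mset f (mset ys))" by (simp only: h)
  also have "\<dots> = prod_mset (mset (map f ys))" by (simp only: mset_map)
  also have "\<dots> = prod_list (map f ys)" by (simp only: prod_mset_prod_list)
  finally show ?thesis .
qed

lemma prod_linear_mset:
  fixes as bs :: "complex list"
  assumes "(\<Prod>a\<leftarrow>as. [:- a, 1:]) = (\<Prod>a\<leftarrow>bs. [:- a, 1:])"
  shows "mset as = mset bs"
  using assms
proof (induct as arbitrary: bs)
  case Nil
  show ?case
  proof (cases bs)
    case (Cons b bs')
    have "poly (\<Prod>a\<leftarrow>bs. [:- a, 1:]) b = 0"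
      unfolding Cons by simp
    then show ?thesis using Nil.prems[symmetric] by simp
  qed simp
next
  case (Cons a as)
  have "poly (\<Prod>a\<leftarrow>(a # as). [:- a, 1:]) a = 0" by simp
  then have "poly (\<Prod>a\<leftarrow>bs. [:- a, 1:]) a = 0" by (simp only: Cons.prems)
  then have "a \<in> set bs" by (auto simp: poly_prod_list prod_list_zero_iff)
  then have mb: "mset bs = mset (a # remove1 a bs)" by simp
  have "[:- a, 1:] * (\<Prod>a\<leftarrow>as. [:- a, 1:]) = (\<Prod>a\<leftarrow>(a # as). [:- a, 1:])" by simp
  also have "\<dots> = (\<Prod>a\<leftarrow>bs. [:- a, 1:])" by (rule Cons.prems)
  also have "\<dots> = (\<Prod>a\<leftarrow>(a # remove1 a bs). [:- a, 1:])"
    by (rule prod_list_mset_eq[OF mb])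
  also have "\<dots> = [:- a, 1:] * (\<Prod>a\<leftarrow>remove1 a bs. [:- a, 1:])" by simp
  finally have eqc: "[:- a, 1:] * (\<Prod>a\<leftarrow>as. [:- a, 1:]) = [:- a, 1:] * (\<Prod>a\<leftarrow>remove1 a bs. [:- a, 1:])" .
  then have "(\<Prod>a\<leftarrow>as. [:- a, 1:]) = (\<Prod>a\<leftarrow>remove1 a bs. [:- a, 1:])"
  proof -
    have nz: "[:- a, 1:] \<noteq> (0::complex poly)" by simp
    show ?thesis by (rule iffD1[OF mult_left_cancel[OF nz] eqc])
  qed
  then have "mset as = mset (remove1 a bs)" by (rule Cons.hyps)
  then have "mset (a # as) = mset (a # remove1 a bs)" by (simp only: mset.simps)
  then show ?case using mb by (rule trans[OF _ sym])
qed

lemma sum_list_mset_eq: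
  assumes h: "mset xs = mset ys"
  shows "sum_list (map f xs) = (sum_list (map f ys) :: 'b :: comm_monoid_add)"
proof -
  have "sum_list (map f xs) = sum_mset (mset (map f xs))" by (simp only: sum_mset_sum_list)
  also have "\<dots> = sum_mset (image_mset f (mset xs))" by (simp only: mset_map)
  also have "\<dots> = sum_mset (image_mset f (mset ys))" by (simp only: h)
  also have "\<dots> = sum_mset (mset (map f ys))" by (simp only: mset_map)
  also have "\<dots> = sum_list (map f ys)" by (simp only: sum_mset_sum_list)
  finally show ?thesis .
qed

lemma dephase_carrier: "X \<in> carrier_mat d d \<Longrightarrow> dephase X \<in> carrier_mat d d"
  unfolding dephase_def by auto

lemma vn_entropy_dephase:
  assumes X: "X \<in> carrier_mat d d"
  shows "vn_entropy (dephase X) = - (\<Sum>i<d. Re (X $$ (i,i)) * log 2 (Re (X $$ (i,i))))"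
proof -
  let ?D = "dephase X"
  have D: "?D \<in> carrier_mat d d" using X by (rule dephase_carrier)
  have ut: "upper_triangular ?D" using X unfolding upper_triangular_def dephase_def by auto
  have cp: "char_poly ?D = (\<Prod>a\<leftarrow>diag_mat ?D. [:- a, 1:])"
    by (rule char_poly_upper_triangular[OF D ut])
  have ex: "\<exists>as. char_poly ?D = (\<Prod>a\<leftarrow>as. [:- a, 1:]) \<and> length as = dim_row ?D"
    by (intro exI[of _ "diag_mat ?D"] conjI cp) (simp add: diag_mat_def)
  have ev: "char_poly ?D = (\<Prod>a\<leftarrow>eigvals ?D. [:- a, 1:])"
    unfolding eigvals_def using someI_ex[OF ex] by blast
  have me: "mset (eigvals ?D) = mset (diag_mat ?D)"
    by (rule prod_linear_mset) (rule trans[OF ev[symmetric] cp])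
  have e1: "vn_entropy ?D = - (\<Sum>a\<leftarrow>diag_mat ?D. Re a * log 2 (Re a))"
    unfolding vn_entropy_def by (simp only: sum_list_mset_eq[OF me])
  have e2: "diag_mat ?D = map (\<lambda>i. X $$ (i,i)) [0..<d]"
    using X unfolding diag_mat_def by (simp add: dephase_def cong: map_cong)
  have e3: "(\<Sum>a\<leftarrow>map (\<lambda>i. X $$ (i,i)) [0..<d]. Re a * log 2 (Re a))
      = (\<Sum>i<d. Re (X $$ (i,i)) * log 2 (Re (X $$ (i,i))))"
    by (simp add: sum_list_distinct_conv_sum_set atLeast0LessThan comp_def)
  show ?thesis unfolding e1 e2 e3 ..
qed


lemma herm_entry:
  assumes "hermitian d H" "i < d" "j < d"
  shows "H $$ (i,j) = cnj (H $$ (j,i))"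
proof -
  have H: "H \<in> carrier_mat d d" and a: "adj H = H" using assms(1) unfolding hermitian_def by auto
  have "H $$ (i,j) = adj H $$ (i,j)" using a by simp
  also have "\<dots> = cnj (H $$ (j,i))" using H assms(2,3) unfolding adj_def by auto
  finally show ?thesis .
qed

lemma quad_form:
  assumes r: "\<rho> \<in> carrier_mat d d" and v: "v \<in> carrier_vec d"
  shows "conjugate v \<bullet> (\<rho> *\<^sub>v v) = (\<Sum>i<d. cnj (v $ i) * (\<Sum>j<d. \<rho> $$ (i,j) * v $ j))"
  using r v by (auto simp: scalar_prod_def atLeast0LessThan intro!: sum.cong)

lemma density_quad:
  assumes "density d \<rho>"
  shows "0 \<le> Re (\<Sum>i<d. cnj (f i) * (\<Sum>j<d. \<rho> $$ (i,j) * f j))"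
proof -
  have r: "\<rho> \<in> carrier_mat d d" using assms unfolding density_def hermitian_def by auto
  have v: "vec d f \<in> carrier_vec d" by simp
  have "0 \<le> Re (conjugate (vec d f) \<bullet> (\<rho> *\<^sub>v vec d f))"
    using assms v unfolding density_def by blast
  also have "conjugate (vec d f) \<bullet> (\<rho> *\<^sub>v vec d f) = (\<Sum>i<d. cnj (f i) * (\<Sum>j<d. \<rho> $$ (i,j) * f j))"
    unfolding quad_form[OF r v] by (intro sum.cong refl) auto
  finally show ?thesis .
qed

lemma sum_delta_r:
  fixes d :: nat
  assumes "i < d"
  shows "(\<Sum>j<d. g j * (if j = i then c else 0)) = g i * (c :: complex)"
proof -
  have "(\<Sum>j<d. g j * (if j = i then c else 0)) = (\<Sum>j<d. if j = i then g j * c else 0)"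
    by (rule sum.cong) auto
  also have "\<dots> = g i * c" using assms by (simp add: sum.delta)
  finally show ?thesis .
qed

lemma sum_delta_l:
  fixes d :: nat
  assumes "i < d"
  shows "(\<Sum>j<d. (if j = i then c else 0) * g j) = c * (g i :: complex)"
  using sum_delta_r[OF assms, of g c] by (simp add: mult.commute)

lemma sum_two_r:
  fixes d :: nat
  assumes "i < d" "j < d"
  shows "(\<Sum>l<d. g l * ((if l = i then x else 0) + (if l = j then y else 0))) = g i * x + g j * (y :: complex)"
  using sum_delta_r[OF assms(1), of g x] sum_delta_r[OF assms(2), of g y]
  by (simp add: distrib_left sum.distrib)

lemma sum_two_l:
  fixes d :: nat
  assumes "i < d" "j < d"
  shows "(\<Sum>l<d. ((if l = i then x else 0) + (if l = j then y else 0)) * g l) = x * g i + y * (g j :: complex)"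
  using sum_delta_l[OF assms(1), of x g] sum_delta_l[OF assms(2), of y g]
  by (simp add: distrib_right sum.distrib)

lemma density_carrier: "density d \<rho> \<Longrightarrow> \<rho> \<in> carrier_mat d d"
  unfolding density_def hermitian_def by auto

lemma density_diag:
  assumes dr: "density d \<rho>" and i: "i < d"
  shows "\<rho> $$ (i,i) = of_real (Re (\<rho> $$ (i,i)))" "0 \<le> Re (\<rho> $$ (i,i))"
proof -
  have h: "hermitian d \<rho>" using dr unfolding density_def by auto
  have "\<rho> $$ (i,i) = cnj (\<rho> $$ (i,i))" by (rule herm_entry[OF h i i])
  then have "Im (\<rho> $$ (i,i)) = 0" by (metis Reals_cnj_iff complex_is_Real_iff)
  then show "\<rho> $$ (i,i) = of_real (Re (\<rho> $$ (i,i)))" by (simp add: complex_eq_iff)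
  have "0 \<le> Re (\<Sum>k<d. cnj (if k = i then 1 else 0) * (\<Sum>j<d. \<rho> $$ (k,j) * (if j = i then 1 else 0)))"
    by (rule density_quad[OF dr])
  also have "(\<Sum>k<d. cnj (if k = i then 1 else 0) * (\<Sum>j<d. \<rho> $$ (k,j) * (if j = i then 1 else 0)))
     = (\<Sum>k<d. (if k = i then 1 else 0) * \<rho> $$ (k,i))"
    using i by (intro sum.cong refl) (simp add: sum_delta_r)
  also have "\<dots> = \<rho> $$ (i,i)" using sum_delta_l[OF i, of 1 "\<lambda>k. \<rho> $$ (k,i)"] by simp
  finally show "0 \<le> Re (\<rho> $$ (i,i))" .
qed

lemma density_offdiag:
  assumes dr: "density d \<rho>" and i: "i < d" and j: "j < d"
  shows "(cmod (\<rho> $$ (i,j)))^2 \<le> Re (\<rho> $$ (i,i)) * Re (\<rho> $$ (j,j))"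
proof (cases "i = j")
  case True
  then show ?thesis using density_diag[OF dr i]
    by (metis norm_of_real power2_eq_square abs_mult_self_eq order_refl real_sqrt_abs2 real_sqrt_mult norm_mult)
next
  case False
  have h: "hermitian d \<rho>" using dr unfolding density_def by auto
  define a where "a = Re (\<rho> $$ (i,i))"
  define b where "b = Re (\<rho> $$ (j,j))"
  define c where "c = \<rho> $$ (i,j)"
  have ra: "\<rho> $$ (i,i) = of_real a" using density_diag(1)[OF dr i] a_def by simp
  have rb: "\<rho> $$ (j,j) = of_real b" using density_diag(1)[OF dr j] b_def by simp
  have rc: "\<rho> $$ (j,i) = cnj c" using herm_entry[OF h j i] c_def by simp
  have a0: "0 \<le> a" using density_diag(2)[OF dr i] a_def by simp
  have b0: "0 \<le> b" using density_diag(2)[OF dr j] b_def by simp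
  have Q: "0 \<le> s^2 * (cmod c)^2 * a - 2 * s * (cmod c)^2 + b" for s :: real
  proof -
    define x where "x = - (of_real s * c)"
    define f where "f = (\<lambda>l. (if l = i then x else 0) + (if l = j then (1::complex) else 0))"
    have "0 \<le> Re (\<Sum>k<d. cnj (f k) * (\<Sum>l<d. \<rho> $$ (k,l) * f l))" by (rule density_quad[OF dr])
    also have "(\<Sum>k<d. cnj (f k) * (\<Sum>l<d. \<rho> $$ (k,l) * f l))
       = (\<Sum>k<d. ((if k = i then cnj x else 0) + (if k = j then 1 else 0)) * (\<rho> $$ (k,i) * x + \<rho> $$ (k,j)))"
      unfolding f_def using i j by (intro sum.cong refl) (simp add: sum_two_r)
    also have "\<dots> = cnj x * (\<rho> $$ (i,i) * x + \<rho> $$ (i,j)) + (\<rho> $$ (j,i) * x + \<rho> $$ (j,j))"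
      using sum_two_l[OF i j, of "cnj x" 1 "\<lambda>k. \<rho> $$ (k,i) * x + \<rho> $$ (k,j)"] by simp
    also have "\<dots> = of_real s ^ 2 * of_real a * (c * cnj c) - 2 * of_real s * (c * cnj c) + of_real b"
      unfolding ra rb rc x_def c_def by (simp add: algebra_simps power2_eq_square)
    also have "\<dots> = of_real (s^2 * (cmod c)^2 * a - 2 * s * (cmod c)^2 + b)"
      by (simp add: complex_norm_square[symmetric] algebra_simps)
    finally show ?thesis by simp
  qed
  show ?thesis
  proof (cases "a = 0")
    case False
    then have ap: "a > 0" using a0 by simp
    have "0 \<le> (1/a)^2 * (cmod c)^2 * a - 2 * (1/a) * (cmod c)^2 + b" by (rule Q)
    also have "\<dots> = b - (cmod c)^2 / a" using ap by (simp add: field_simps power2_eq_square)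
    finally have "(cmod c)^2 / a \<le> b" by simp
    then have "(cmod c)^2 \<le> b * a" using ap by (simp add: pos_divide_le_eq)
    then show ?thesis unfolding a_def b_def c_def by (simp add: mult.commute)
  next
    case True
    have "cmod c = 0"
    proof (rule ccontr)
      assume "cmod c \<noteq> 0"
      then have cp: "(cmod c)^2 > 0" by simp
      have "0 \<le> ((b+1)/(2*(cmod c)^2))^2 * (cmod c)^2 * a - 2 * ((b+1)/(2*(cmod c)^2)) * (cmod c)^2 + b"
        by (rule Q)
      also have "\<dots> = -1" using cp True by (simp add: field_simps)
      finally show False by simp
    qed
    then show ?thesis unfolding a_def b_def c_def using True a_def by simp
  qed
qed


lemma if_one_mult[simp]: "(if P then 1 else 0) * (x::complex) = (if P then x else 0)"
  "x * (if P then 1 else 0) = (if P then x else 0)" by auto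

lemma eser_chain:
  assumes H: "H \<in> carrier_mat d d" and ij: "i < d" "j < d"
  shows "((\<lambda>z. eser H i j (c * z)) has_field_derivative (\<Sum>m<d. H $$ (i,m) * eser H m j (c * z)) * c) (at z)"
  by (rule DERIV_chain2[OF eser_deriv_left[OF H ij]]) (rule DERIV_cmult_Id)

definition Qf :: "nat \<Rightarrow> complex mat \<Rightarrow> complex mat \<Rightarrow> nat \<Rightarrow> complex \<Rightarrow> complex" where
  "Qf d H \<rho> i z = (\<Sum>b<d. (\<Sum>a<d. eser H i a (- \<i> * z) * \<rho> $$ (a,b)) * eser H b i (\<i> * z))"

definition qd :: "nat \<Rightarrow> complex mat \<Rightarrow> complex mat \<Rightarrow> nat \<Rightarrow> complex" where
  "qd d H \<rho> i = (\<Sum>a<d. - \<i> * H $$ (i,a) * \<rho> $$ (a,i)) + (\<Sum>b<d. \<i> * \<rho> $$ (i,b) * H $$ (b,i))"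

lemma evolve_entry:
  assumes H: "H \<in> carrier_mat d d" and r: "\<rho> \<in> carrier_mat d d" and i: "i < d"
  shows "evolve H t \<rho> $$ (i,i) = Qf d H \<rho> i (of_real t)"
proof -
  have "evolve H t \<rho> $$ (i,i) = (Um d H t * \<rho> * Vm d H t) $$ (i,i)" using evolve_UV[OF H] by simp
  also have "\<dots> = (\<Sum>b<d. (Um d H t * \<rho>) $$ (i,b) * Vm d H t $$ (b,i))"
    by (rule mult_entry) (use r i in \<open>auto simp: Um_def Vm_def\<close>)
  also have "\<dots> = (\<Sum>b<d. (\<Sum>a<d. Um d H t $$ (i,a) * \<rho> $$ (a,b)) * Vm d H t $$ (b,i))"
    by (intro sum.cong refl arg_cong2[where f = "(*)"] mult_entry) (use r i in \<open>auto simp: Um_def Vm_def\<close>)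
  also have "\<dots> = Qf d H \<rho> i (of_real t)"
    unfolding Qf_def Um_def Vm_def using i by (intro sum.cong refl) auto
  finally show ?thesis .
qed

lemma Qf_deriv:
  assumes H: "H \<in> carrier_mat d d" and r: "\<rho> \<in> carrier_mat d d" and i: "i < d"
  shows "(Qf d H \<rho> i has_field_derivative qd d H \<rho> i) (at 0)"
proof -
  have "(Qf d H \<rho> i has_field_derivative
     (\<Sum>b<d. (\<Sum>a<d. ((\<Sum>m<d. H $$ (i,m) * eser H m a (- \<i> * 0)) * (- \<i>)) * \<rho> $$ (a,b)) * eser H b i (\<i> * 0)
        + ((\<Sum>m<d. H $$ (b,m) * eser H m i (\<i> * 0)) * \<i>) * (\<Sum>a<d. eser H i a (- \<i> * 0) * \<rho> $$ (a,b)))) (at 0)"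
    unfolding Qf_def[abs_def]
    by (intro DERIV_sum DERIV_mult DERIV_cmult_right eser_chain[OF H]) (use i in auto)
  moreover have "(\<Sum>b<d. (\<Sum>a<d. ((\<Sum>m<d. H $$ (i,m) * eser H m a (- \<i> * 0)) * (- \<i>)) * \<rho> $$ (a,b)) * eser H b i (\<i> * 0)
        + ((\<Sum>m<d. H $$ (b,m) * eser H m i (\<i> * 0)) * \<i>) * (\<Sum>a<d. eser H i a (- \<i> * 0) * \<rho> $$ (a,b)))
     = qd d H \<rho> i"
  proof -
    have e1: "(\<Sum>m<d. H $$ (k,m) * eser H m a 0) = H $$ (k,a)" if "a < d" "k < d" for a k
      using that by (simp add: eser_zero[OF H] sum.delta sum.delta')
    have e2: "(\<Sum>a<d. eser H i a 0 * \<rho> $$ (a,b)) = \<rho> $$ (i,b)" if "b < d" for b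
      using that i by (simp add: eser_zero[OF H] sum.delta sum.delta')
    have "(\<Sum>b<d. (\<Sum>a<d. ((\<Sum>m<d. H $$ (i,m) * eser H m a (- \<i> * 0)) * (- \<i>)) * \<rho> $$ (a,b)) * eser H b i (\<i> * 0)
        + ((\<Sum>m<d. H $$ (b,m) * eser H m i (\<i> * 0)) * \<i>) * (\<Sum>a<d. eser H i a (- \<i> * 0) * \<rho> $$ (a,b)))
      = (\<Sum>b<d. (\<Sum>a<d. (H $$ (i,a) * (- \<i>)) * \<rho> $$ (a,b)) * (if b = i then 1 else 0)
        + (H $$ (b,i) * \<i>) * \<rho> $$ (i,b))"
      using i by (intro sum.cong refl) (simp add: e1 e2 eser_zero[OF H])
    also have "\<dots> = (\<Sum>a<d. (H $$ (i,a) * (- \<i>)) * \<rho> $$ (a,i)) + (\<Sum>b<d. (H $$ (b,i) * \<i>) * \<rho> $$ (i,b))"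
      using i by (simp add: sum.distrib sum.delta sum.delta')
    also have "\<dots> = qd d H \<rho> i" unfolding qd_def by (simp add: mult_ac)
    finally show ?thesis .
  qed
  ultimately show ?thesis by simp
qed

lemma q_deriv:
  assumes H: "H \<in> carrier_mat d d" and r: "\<rho> \<in> carrier_mat d d" and i: "i < d"
  shows "((\<lambda>t. Re (evolve H t \<rho> $$ (i,i))) has_real_derivative Re (qd d H \<rho> i)) (at 0)"
proof -
  have "(Qf d H \<rho> i has_field_derivative qd d H \<rho> i) (at (of_real 0))" using Qf_deriv[OF assms] by simp
  then have "((\<lambda>t. Re (Qf d H \<rho> i (of_real t))) has_real_derivative Re (qd d H \<rho> i)) (at 0)"
    by (intro has_field_derivative_Re has_vector_derivative_real_field)
  then show ?thesis using evolve_entry[OF assms] by simp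
qed


lemma herm_pow_entry:
  assumes h: "hermitian d H"
  shows "i < d \<Longrightarrow> j < d \<Longrightarrow> (H ^\<^sub>m k) $$ (j,i) = cnj ((H ^\<^sub>m k) $$ (i,j))"
proof (induct k arbitrary: i j)
  case 0 then show ?case using h unfolding hermitian_def by auto
next
  case (Suc k)
  have H: "H \<in> carrier_mat d d" using h unfolding hermitian_def by auto
  have "(H ^\<^sub>m Suc k) $$ (j,i) = (H * H ^\<^sub>m k) $$ (j,i)" by (simp only: pow_Suc_left[OF H])
  also have "\<dots> = (\<Sum>m<d. H $$ (j,m) * (H ^\<^sub>m k) $$ (m,i))"
    by (rule mult_entry) (use H Suc.prems in auto)
  also have "\<dots> = (\<Sum>m<d. cnj ((H ^\<^sub>m k) $$ (i,m) * H $$ (m,j)))"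
  proof (intro sum.cong refl)
    fix m assume "m \<in> {..<d}"
    then have m: "m < d" by simp
    have "(H ^\<^sub>m k) $$ (m,i) = cnj ((H ^\<^sub>m k) $$ (i,m))" by (rule Suc.hyps[OF Suc.prems(1) m])
    moreover have "H $$ (j,m) = cnj (H $$ (m,j))" by (rule herm_entry[OF h Suc.prems(2) m])
    ultimately show "H $$ (j,m) * (H ^\<^sub>m k) $$ (m,i) = cnj ((H ^\<^sub>m k) $$ (i,m) * H $$ (m,j))"
      by (simp only: complex_cnj_mult mult.commute)
  qed
  also have "\<dots> = cnj (\<Sum>m<d. (H ^\<^sub>m k) $$ (i,m) * H $$ (m,j))" by simp
  also have "(\<Sum>m<d. (H ^\<^sub>m k) $$ (i,m) * H $$ (m,j)) = (H ^\<^sub>m k * H) $$ (i,j)"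
    by (rule mult_entry[symmetric]) (use H Suc.prems in auto)
  finally show ?case by simp
qed

lemma eser_cnj:
  assumes h: "hermitian d H" and ij: "i < d" "j < d"
  shows "eser H j i (cnj z) = cnj (eser H i j z)"
proof -
  have H: "H \<in> carrier_mat d d" using h unfolding hermitian_def by auto
  have "(\<lambda>k. ecoef H i j k * z ^ k) sums eser H i j z"
    unfolding eser_def by (rule summable_sums[OF eser_summable[OF H ij]])
  then have "(\<lambda>k. cnj (ecoef H i j k * z ^ k)) sums cnj (eser H i j z)"
    by (simp only: sums_cnj)
  moreover have "(\<lambda>k. cnj (ecoef H i j k * z ^ k)) = (\<lambda>k. ecoef H j i k * cnj z ^ k)"
  proof
    fix k show "cnj (ecoef H i j k * z ^ k) = ecoef H j i k * cnj z ^ k"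
      unfolding ecoef_def using herm_pow_entry[OF h ij, of k] by simp
  qed
  ultimately have "(\<lambda>k. ecoef H j i k * cnj z ^ k) sums cnj (eser H i j z)" by (simp only:)
  then show ?thesis unfolding eser_def by (rule sums_unique[symmetric])
qed

lemma q_nonneg:
  assumes h: "hermitian d H" and dr: "density d \<rho>" and i: "i < d"
  shows "0 \<le> Re (evolve H t \<rho> $$ (i,i))"
proof -
  have H: "H \<in> carrier_mat d d" using h unfolding hermitian_def by auto
  have r: "\<rho> \<in> carrier_mat d d" by (rule density_carrier[OF dr])
  define u where "u = (\<lambda>a. eser H i a (- \<i> * of_real t))"
  have v: "eser H b i (\<i> * of_real t) = cnj (u b)" if "b < d" for b
    unfolding u_def using eser_cnj[OF h i that, of "- \<i> * of_real t"] by simp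
  have "evolve H t \<rho> $$ (i,i) = (\<Sum>b<d. (\<Sum>a<d. u a * \<rho> $$ (a,b)) * cnj (u b))"
    unfolding evolve_entry[OF H r i] Qf_def u_def using v u_def by (intro sum.cong refl) auto
  also have "\<dots> = (\<Sum>b<d. \<Sum>a<d. u a * \<rho> $$ (a,b) * cnj (u b))"
    by (simp add: sum_distrib_right)
  also have "\<dots> = (\<Sum>a<d. \<Sum>b<d. u a * \<rho> $$ (a,b) * cnj (u b))"
    by (rule sum.swap)
  also have "\<dots> = (\<Sum>a<d. cnj (cnj (u a)) * (\<Sum>b<d. \<rho> $$ (a,b) * cnj (u b)))"
    by (simp add: sum_distrib_left mult.assoc)
  finally have e: "evolve H t \<rho> $$ (i,i) = (\<Sum>a<d. cnj (cnj (u a)) * (\<Sum>b<d. \<rho> $$ (a,b) * cnj (u b)))" .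
  show ?thesis unfolding e by (rule density_quad[OF dr])
qed

lemma zero_row_pow:
  assumes H: "H \<in> carrier_mat d d" and i: "i < d" and row0: "\<And>a. a < d \<Longrightarrow> H $$ (i,a) = 0"
  shows "a < d \<Longrightarrow> (H ^\<^sub>m Suc k) $$ (i,a) = 0"
proof -
  assume a: "a < d"
  have "(H ^\<^sub>m Suc k) $$ (i,a) = (H * H ^\<^sub>m k) $$ (i,a)" by (simp only: pow_Suc_left[OF H])
  also have "\<dots> = (\<Sum>m<d. H $$ (i,m) * (H ^\<^sub>m k) $$ (m,a))"
    by (rule mult_entry) (use H i a in auto)
  also have "\<dots> = 0" using row0 by simp
  finally show ?thesis .
qed

lemma zero_col_pow:
  assumes H: "H \<in> carrier_mat d d" and i: "i < d" and col0: "\<And>a. a < d \<Longrightarrow> H $$ (a,i) = 0"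
  shows "a < d \<Longrightarrow> (H ^\<^sub>m Suc k) $$ (a,i) = 0"
proof -
  assume a: "a < d"
  have "(H ^\<^sub>m Suc k) $$ (a,i) = (H ^\<^sub>m k * H) $$ (a,i)" by simp
  also have "\<dots> = (\<Sum>m<d. (H ^\<^sub>m k) $$ (a,m) * H $$ (m,i))"
    by (rule mult_entry) (use H i a in auto)
  also have "\<dots> = 0" using col0 by simp
  finally show ?thesis .
qed

lemma eser_single:
  assumes H: "H \<in> carrier_mat d d" and ij: "i < d" "j < d"
    and z: "\<And>k. (H ^\<^sub>m Suc k) $$ (i,j) = 0"
  shows "eser H i j w = (if i = j then 1 else 0)"
proof -
  have "(\<lambda>k. ecoef H i j k * w ^ k) = (\<lambda>k. if k = 0 then (if i = j then 1 else 0) else 0)"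
  proof
    fix k show "ecoef H i j k * w ^ k = (if k = 0 then (if i = j then 1 else 0) else 0)"
      using z[of "k - 1"] H ij by (cases k) (auto simp: ecoef_def)
  qed
  moreover have "(\<lambda>k. if k = 0 then (if i = j then 1 else 0) else 0) sums (if i = j then (1::complex) else 0)"
    using sums_single[of 0 "\<lambda>_. if i = j then (1::complex) else 0"] by simp
  ultimately show ?thesis unfolding eser_def by (simp add: sums_iff)
qed

lemma evolve_zero_rowcol:
  assumes H: "H \<in> carrier_mat d d" and r: "\<rho> \<in> carrier_mat d d" and i: "i < d"
    and row0: "\<And>a. a < d \<Longrightarrow> H $$ (i,a) = 0" and col0: "\<And>a. a < d \<Longrightarrow> H $$ (a,i) = 0"
  shows "evolve H t \<rho> $$ (i,i) = \<rho> $$ (i,i)"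
proof -
  have e1: "eser H i a w = (if i = a then 1 else 0)" if "a < d" for a w
    by (rule eser_single[OF H i that zero_row_pow[OF H i row0 that]])
  have e2: "eser H a i w = (if a = i then 1 else 0)" if "a < d" for a w
    by (rule eser_single[OF H that i zero_col_pow[OF H i col0 that]])
  have s1: "(\<Sum>a<d. eser H i a w * \<rho> $$ (a,b)) = \<rho> $$ (i,b)" for w b
  proof -
    have "(\<Sum>a<d. eser H i a w * \<rho> $$ (a,b)) = (\<Sum>a<d. if i = a then \<rho> $$ (a,b) else 0)"
      by (intro sum.cong refl) (simp add: e1)
    also have "\<dots> = \<rho> $$ (i,b)" using i by (simp add: sum.delta)
    finally show ?thesis .
  qed
  have "evolve H t \<rho> $$ (i,i) = (\<Sum>b<d. \<rho> $$ (i,b) * eser H b i (\<i> * of_real t))"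
    unfolding evolve_entry[OF H r i] Qf_def s1 ..
  also have "\<dots> = (\<Sum>b<d. if b = i then \<rho> $$ (i,b) else 0)"
    by (intro sum.cong refl) (simp add: e2)
  also have "\<dots> = \<rho> $$ (i,i)" using i by (simp add: sum.delta')
  finally show ?thesis .
qed


definition pp :: "complex mat \<Rightarrow> nat \<Rightarrow> real" where
  "pp \<rho> i = Re (\<rho> $$ (i,i))"

definition Lg :: "complex mat \<Rightarrow> nat \<Rightarrow> real" where
  "Lg \<rho> i = log 2 (pp \<rho> i)"

definition ww :: "complex mat \<Rightarrow> complex mat \<Rightarrow> nat \<Rightarrow> nat \<Rightarrow> real" where
  "ww H \<rho> i a = Im (H $$ (i,a) * \<rho> $$ (a,i))"

definition hh :: "real \<Rightarrow> real" where
  "hh x = - (x * log 2 x)"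

lemma rel_coh_evolve:
  assumes H: "H \<in> carrier_mat d d" and r: "\<rho> \<in> carrier_mat d d"
  shows "rel_coh (evolve H t \<rho>) = (\<Sum>i<d. hh (Re (evolve H t \<rho> $$ (i,i)))) - vn_entropy \<rho>"
  unfolding rel_coh_def vn_entropy_dephase[OF evolve_carrier[OF H r]] vn_entropy_evolve[OF H r] hh_def
  by (simp add: sum_negf)

lemma evolve_zero_entry:
  assumes H: "H \<in> carrier_mat d d" and r: "\<rho> \<in> carrier_mat d d" and i: "i < d"
  shows "evolve H 0 \<rho> $$ (i,i) = \<rho> $$ (i,i)"
proof -
  have s1: "(\<Sum>a<d. eser H i a 0 * \<rho> $$ (a,b)) = \<rho> $$ (i,b)" if b: "b < d" for b
  proof -
    have "(\<Sum>a<d. eser H i a 0 * \<rho> $$ (a,b)) = (\<Sum>a<d. if i = a then \<rho> $$ (a,b) else 0)"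
      by (intro sum.cong refl) (simp add: eser_zero[OF H i])
    also have "\<dots> = \<rho> $$ (i,b)" using i by (simp add: sum.delta)
    finally show ?thesis .
  qed
  have "evolve H 0 \<rho> $$ (i,i) = (\<Sum>b<d. \<rho> $$ (i,b) * eser H b i 0)"
    unfolding evolve_entry[OF H r i] Qf_def using s1 by simp
  also have "\<dots> = (\<Sum>b<d. if b = i then \<rho> $$ (i,b) else 0)"
    by (intro sum.cong refl) (simp add: eser_zero[OF H _ i])
  also have "\<dots> = \<rho> $$ (i,i)" using i by (simp add: sum.delta')
  finally show ?thesis .
qed

lemma hh_deriv:
  assumes "0 < x"
  shows "(hh has_real_derivative - (log 2 x + 1 / ln 2)) (at x)"
  unfolding hh_def[abs_def]
  using assms by (auto intro!: derivative_eq_intros simp: field_simps log_def)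

lemma qd_sum_zero:
  "(\<Sum>i<d. qd d H \<rho> i) = 0"
proof -
  have "(\<Sum>i<d. \<Sum>b<d. \<i> * \<rho> $$ (i,b) * H $$ (b,i)) = (\<Sum>b<d. \<Sum>i<d. \<i> * \<rho> $$ (i,b) * H $$ (b,i))"
    by (rule sum.swap)
  also have "\<dots> = (\<Sum>i<d. \<Sum>a<d. \<i> * H $$ (i,a) * \<rho> $$ (a,i))"
    by (simp add: mult_ac)
  finally have e: "(\<Sum>i<d. \<Sum>b<d. \<i> * \<rho> $$ (i,b) * H $$ (b,i)) = (\<Sum>i<d. \<Sum>a<d. \<i> * H $$ (i,a) * \<rho> $$ (a,i))" .
  show ?thesis unfolding qd_def sum.distrib e
    by (simp add: sum_negf[symmetric] sum.distrib[symmetric])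
qed

lemma Re_qd:
  "Re (qd d H \<rho> i) = (\<Sum>a<d. ww H \<rho> i a) - (\<Sum>b<d. ww H \<rho> b i)"
proof -
  have e1: "Re (- \<i> * H $$ (i,a) * \<rho> $$ (a,i)) = ww H \<rho> i a" for a
    unfolding ww_def by (simp add: algebra_simps)
  have e2: "Re (\<i> * \<rho> $$ (i,b) * H $$ (b,i)) = - ww H \<rho> b i" for b
    unfolding ww_def by (simp add: algebra_simps)
  show ?thesis unfolding qd_def plus_complex.sel Re_sum e1 e2 by (simp add: sum_negf)
qed

lemma density_row_zero:
  assumes dr: "density d \<rho>" and i: "i < d" and a: "a < d" and p0: "pp \<rho> i = 0"
  shows "\<rho> $$ (i,a) = 0" "\<rho> $$ (a,i) = 0"
proof -
  have "(cmod (\<rho> $$ (i,a)))^2 \<le> Re (\<rho> $$ (i,i)) * Re (\<rho> $$ (a,a))" by (rule density_offdiag[OF dr i a])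
  then show "\<rho> $$ (i,a) = 0" using p0 unfolding pp_def by simp
  have "(cmod (\<rho> $$ (a,i)))^2 \<le> Re (\<rho> $$ (a,a)) * Re (\<rho> $$ (i,i))" by (rule density_offdiag[OF dr a i])
  then show "\<rho> $$ (a,i) = 0" using p0 unfolding pp_def by simp
qed

lemma qd_zero:
  assumes dr: "density d \<rho>" and i: "i < d" and p0: "pp \<rho> i = 0"
  shows "qd d H \<rho> i = 0"
  unfolding qd_def using density_row_zero[OF dr i _ p0] by simp

lemma formula_algebra:
  "- (\<Sum>i<d. Lg \<rho> i * Re (qd d H \<rho> i)) = (\<Sum>i<d. \<Sum>a<d. ww H \<rho> i a * (Lg \<rho> a - Lg \<rho> i))"
proof -
  have "(\<Sum>i<d. Lg \<rho> i * (\<Sum>b<d. ww H \<rho> b i)) = (\<Sum>i<d. \<Sum>b<d. Lg \<rho> i * ww H \<rho> b i)"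
    by (simp add: sum_distrib_left)
  also have "\<dots> = (\<Sum>b<d. \<Sum>i<d. Lg \<rho> i * ww H \<rho> b i)" by (rule sum.swap)
  finally have e: "(\<Sum>i<d. Lg \<rho> i * (\<Sum>b<d. ww H \<rho> b i)) = (\<Sum>i<d. \<Sum>a<d. Lg \<rho> a * ww H \<rho> i a)" .
  have "- (\<Sum>i<d. Lg \<rho> i * Re (qd d H \<rho> i))
      = (\<Sum>i<d. Lg \<rho> i * (\<Sum>b<d. ww H \<rho> b i)) - (\<Sum>i<d. Lg \<rho> i * (\<Sum>a<d. ww H \<rho> i a))"
    unfolding Re_qd by (simp add: right_diff_distrib sum_subtractf)
  also have "\<dots> = (\<Sum>i<d. \<Sum>a<d. ww H \<rho> i a * (Lg \<rho> a - Lg \<rho> i))"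
    unfolding e by (simp add: sum_distrib_left sum_subtractf[symmetric] algebra_simps)
  finally show ?thesis .
qed


lemma hh_nonneg: "0 \<le> x \<Longrightarrow> x \<le> 1 \<Longrightarrow> 0 \<le> hh x"
  unfolding hh_def
proof -
  assume x: "0 \<le> x" "x \<le> 1"
  show "0 \<le> - (x * log 2 x)"
  proof (cases "x = 0")
    case False
    then have "log 2 x \<le> 0" using x by simp
    then show ?thesis using x by (simp add: mult_nonneg_nonpos)
  qed simp
qed

lemma hh_zero[simp]: "hh 0 = 0" unfolding hh_def by simp

locale deco =
  fixes d :: nat and H \<rho> :: "complex mat"
  assumes h: "hermitian d H" and dr: "density d \<rho>"
begin

lemma Hc: "H \<in> carrier_mat d d" using h unfolding hermitian_def by auto
lemma rc: "\<rho> \<in> carrier_mat d d" by (rule density_carrier[OF dr])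

definition q :: "nat \<Rightarrow> real \<Rightarrow> real" where "q i t = Re (evolve H t \<rho> $$ (i,i))"
definition P :: "nat set" where "P = {i. i < d \<and> 0 < pp \<rho> i}"
definition Z :: "nat set" where "Z = {i. i < d \<and> pp \<rho> i = 0}"
definition G :: "real \<Rightarrow> real" where "G t = (\<Sum>i\<in>P. hh (q i t))"
definition R :: "real \<Rightarrow> real" where "R t = (\<Sum>i\<in>Z. hh (q i t))"
definition DG :: real where "DG = (\<Sum>i\<in>P. - (Lg \<rho> i + 1 / ln 2) * Re (qd d H \<rho> i))"

lemma pp_nonneg: "i < d \<Longrightarrow> 0 \<le> pp \<rho> i"
  unfolding pp_def using density_diag(2)[OF dr] by simp

lemma PZ: "{..<d} = P \<union> Z" "P \<inter> Z = {}" "finite P" "finite Z"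
  using pp_nonneg unfolding P_def Z_def by (auto simp: less_le)

lemma q0: "i < d \<Longrightarrow> q i 0 = pp \<rho> i"
  unfolding q_def pp_def using evolve_zero_entry[OF Hc rc] by simp

lemma g_deco: "rel_coh (evolve H t \<rho>) = G t + R t - vn_entropy \<rho>"
proof -
  have "rel_coh (evolve H t \<rho>) = (\<Sum>i<d. hh (q i t)) - vn_entropy \<rho>"
    unfolding rel_coh_evolve[OF Hc rc] q_def ..
  also have "(\<Sum>i<d. hh (q i t)) = G t + R t"
    unfolding G_def R_def PZ(1) using PZ by (simp add: sum.union_disjoint)
  finally show ?thesis .
qed

lemma G_deriv: "(G has_real_derivative DG) (at 0)"
proof -
  have "((\<lambda>t. hh (q i t)) has_real_derivative - (Lg \<rho> i + 1 / ln 2) * Re (qd d H \<rho> i)) (at 0)"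
    if i: "i \<in> P" for i
  proof -
    have id: "i < d" "0 < pp \<rho> i" using i unfolding P_def by auto
    have hd: "(hh has_real_derivative - (Lg \<rho> i + 1 / ln 2)) (at (q i 0))"
      unfolding q0[OF id(1)] Lg_def by (rule hh_deriv[OF id(2)])
    have qd: "(q i has_real_derivative Re (qd d H \<rho> i)) (at 0)"
      unfolding q_def[abs_def] by (rule q_deriv[OF Hc rc id(1)])
    show ?thesis by (rule DERIV_chain2[OF hd qd])
  qed
  then show ?thesis unfolding G_def[abs_def] DG_def by (intro DERIV_sum) auto
qed

lemma R0: "R 0 = 0"
  unfolding R_def using q0 unfolding Z_def by simp

lemma R_nonneg_near: "\<exists>\<delta>>0. \<forall>y. \<bar>0 - y\<bar> < \<delta> \<longrightarrow> R 0 \<le> R y"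
proof -
  have "\<forall>i\<in>Z. eventually (\<lambda>t. q i t < 1) (at 0)"
  proof
    fix i assume i: "i \<in> Z"
    then have id: "i < d" "pp \<rho> i = 0" unfolding Z_def by auto
    have "isCont (q i) 0"
      unfolding q_def[abs_def] by (rule DERIV_isCont[OF q_deriv[OF Hc rc id(1)]])
    then have "(q i \<longlongrightarrow> q i 0) (at 0)" by (simp add: isCont_def)
    moreover have "q i 0 < 1" using q0[OF id(1)] id(2) by simp
    ultimately show "eventually (\<lambda>t. q i t < 1) (at 0)" by (rule order_tendstoD(2))
  qed
  then have "eventually (\<lambda>t. \<forall>i\<in>Z. q i t < 1) (at 0)"
    by (rule eventually_ball_finite[OF PZ(4)])
  then obtain \<delta> where \<delta>: "\<delta> > 0" "\<And>x. x \<noteq> 0 \<Longrightarrow> dist x 0 < \<delta> \<Longrightarrow> \<forall>i\<in>Z. q i x < 1"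
    unfolding eventually_at by auto
  have "R 0 \<le> R y" if y: "\<bar>0 - y\<bar> < \<delta>" for y
  proof (cases "y = 0")
    case False
    then have lt: "\<forall>i\<in>Z. q i y < 1" using \<delta>(2)[of y] y by (simp add: dist_real_def)
    have "0 \<le> R y" unfolding R_def
    proof (rule sum_nonneg)
      fix i assume i: "i \<in> Z"
      then have "i < d" unfolding Z_def by auto
      then have "0 \<le> q i y" unfolding q_def by (rule q_nonneg[OF h dr])
      then show "0 \<le> hh (q i y)" using lt i by (intro hh_nonneg) auto
    qed
    then show ?thesis using R0 by simp
  qed simp
  then show ?thesis using \<delta>(1) by blast
qed

lemma deriv_value:
  assumes D: "((\<lambda>t. rel_coh (evolve H t \<rho>)) has_real_derivative D) (at 0)"
  shows "D = (\<Sum>i<d. \<Sum>a<d. ww H \<rho> i a * (Lg \<rho> a - Lg \<rho> i))"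
proof -
  have Rf: "R = (\<lambda>t. rel_coh (evolve H t \<rho>) - G t + vn_entropy \<rho>)"
    by (rule ext) (simp add: g_deco)
  have "(R has_real_derivative D - DG + 0) (at 0)"
    unfolding Rf by (intro DERIV_add DERIV_diff D G_deriv DERIV_const)
  then have Rd: "(R has_real_derivative D - DG) (at 0)" by simp
  obtain \<delta> where \<delta>: "\<delta> > 0" "\<forall>y. \<bar>0 - y\<bar> < \<delta> \<longrightarrow> R 0 \<le> R y"
    using R_nonneg_near by blast
  have "D - DG = 0" by (rule DERIV_local_min[OF Rd \<delta>(1) \<delta>(2)])
  then have "D = DG" by simp
  also have "DG = (\<Sum>i<d. - (Lg \<rho> i + 1 / ln 2) * Re (qd d H \<rho> i))"
    unfolding DG_def PZ(1) using PZ
    by (simp add: sum.union_disjoint Z_def qd_zero[OF dr])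
  also have "\<dots> = - (\<Sum>i<d. Lg \<rho> i * Re (qd d H \<rho> i)) - (1 / ln 2) * Re (\<Sum>i<d. qd d H \<rho> i)"
  proof -
    have "(\<Sum>i<d. - (Lg \<rho> i + 1 / ln 2) * Re (qd d H \<rho> i))
        = (\<Sum>i<d. - (Lg \<rho> i * Re (qd d H \<rho> i)) - (1 / ln 2) * Re (qd d H \<rho> i))"
      by (intro sum.cong refl) (simp add: algebra_simps)
    also have "\<dots> = - (\<Sum>i<d. Lg \<rho> i * Re (qd d H \<rho> i)) - (1 / ln 2) * (\<Sum>i<d. Re (qd d H \<rho> i))"
      by (simp only: sum_subtractf sum_negf sum_distrib_left)
    finally show ?thesis by (simp only: Re_sum)
  qed
  also have "\<dots> = - (\<Sum>i<d. Lg \<rho> i * Re (qd d H \<rho> i))" by (simp add: qd_sum_zero)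
  also have "\<dots> = (\<Sum>i<d. \<Sum>a<d. ww H \<rho> i a * (Lg \<rho> a - Lg \<rho> i))" by (rule formula_algebra)
  finally show ?thesis .
qed

lemma deriv_exists:
  assumes zero: "\<And>i a. i < d \<Longrightarrow> a < d \<Longrightarrow> pp \<rho> i = 0 \<Longrightarrow> H $$ (i,a) = 0 \<and> H $$ (a,i) = 0"
  shows "\<exists>D. ((\<lambda>t. rel_coh (evolve H t \<rho>)) has_real_derivative D) (at 0)"
proof -
  have "R t = 0" for t
  proof -
    have "q i t = 0" if "i \<in> Z" for i
    proof -
      have id: "i < d" "pp \<rho> i = 0" using that unfolding Z_def by auto
      have "evolve H t \<rho> $$ (i,i) = \<rho> $$ (i,i)"
        by (rule evolve_zero_rowcol[OF Hc rc id(1)]) (use zero id in auto)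
      then show ?thesis using id unfolding q_def pp_def by simp
    qed
    then show ?thesis unfolding R_def by simp
  qed
  then have "(\<lambda>t. rel_coh (evolve H t \<rho>)) = (\<lambda>t. G t - vn_entropy \<rho>)"
    by (intro ext) (simp add: g_deco)
  moreover have "((\<lambda>t. G t - vn_entropy \<rho>) has_real_derivative DG - 0) (at 0)"
    by (intro DERIV_diff G_deriv DERIV_const)
  ultimately show ?thesis by auto
qed

end


lemma Re_cnj_mult_self: "Re (cnj z * z) = (cmod z)^2"
  by (simp add: cmod_def power2_eq_square)

lemma hs_norm_formula:
  assumes H: "H \<in> carrier_mat d d"
  shows "hs_norm H = sqrt (\<Sum>i<d. \<Sum>k<d. (cmod (H $$ (k,i)))^2)"
proof -
  have "mtrace (adj H * H) = (\<Sum>i<d. (adj H * H) $$ (i,i))"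
    unfolding mtrace_def using H by (simp add: adj_def)
  also have "\<dots> = (\<Sum>i<d. \<Sum>k<d. cnj (H $$ (k,i)) * H $$ (k,i))"
  proof (intro sum.cong refl)
    fix i assume i: "i \<in> {..<d}"
    have "(adj H * H) $$ (i,i) = (\<Sum>k<d. adj H $$ (i,k) * H $$ (k,i))"
      by (rule mult_entry) (use H i in \<open>auto simp: adj_def\<close>)
    also have "\<dots> = (\<Sum>k<d. cnj (H $$ (k,i)) * H $$ (k,i))"
      using H i by (intro sum.cong refl) (auto simp: adj_def)
    finally show "(adj H * H) $$ (i,i) = (\<Sum>k<d. cnj (H $$ (k,i)) * H $$ (k,i))" .
  qed
  finally have "Re (mtrace (adj H * H)) = (\<Sum>i<d. \<Sum>k<d. Re (cnj (H $$ (k,i)) * H $$ (k,i)))"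
    by (simp add: Re_sum)
  also have "\<dots> = (\<Sum>i<d. \<Sum>k<d. (cmod (H $$ (k,i)))^2)"
    by (intro sum.cong refl) (simp only: Re_cnj_mult_self)
  finally show ?thesis unfolding hs_norm_def by simp
qed

lemma hs_sum_le:
  assumes H: "H \<in> carrier_mat d d" and n: "hs_norm H \<le> 1"
  shows "(\<Sum>i<d. \<Sum>a<d. (cmod (H $$ (i,a)))^2) \<le> 1"
proof -
  have "(\<Sum>i<d. \<Sum>a<d. (cmod (H $$ (i,a)))^2) = (\<Sum>a<d. \<Sum>i<d. (cmod (H $$ (i,a)))^2)"
    by (rule sum.swap)
  moreover have "sqrt (\<Sum>a<d. \<Sum>i<d. (cmod (H $$ (i,a)))^2) \<le> 1"
    using n hs_norm_formula[OF H] by simp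
  ultimately show ?thesis by simp
qed

lemma var_identity:
  assumes p: "prob_dist d p"
  shows "(\<Sum>i<d. \<Sum>a<d. p i * p a * (log 2 (p a) - log 2 (p i))^2) = 2 * surprisal_var d p"
proof -
  define L where "L = (\<lambda>i. log 2 (p i))"
  define X0 where "X0 = (\<Sum>a<d. p a)"
  define X1 where "X1 = (\<Sum>a<d. p a * L a)"
  define X2 where "X2 = (\<Sum>a<d. p a * L a ^ 2)"
  have s1: "X0 = 1" using p unfolding prob_dist_def X0_def by simp
  have "(\<Sum>i<d. \<Sum>a<d. p i * p a * (L a - L i)^2)
      = (\<Sum>i<d. \<Sum>a<d. p i * (p a * L a ^ 2) - (2 * (p i * L i)) * (p a * L a) + (p i * L i ^ 2) * p a)"
    by (intro sum.cong refl) (simp add: power2_eq_square algebra_simps)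
  also have "\<dots> = (\<Sum>i<d. p i * X2 - (2 * (p i * L i)) * X1 + (p i * L i ^ 2) * X0)"
    unfolding X0_def X1_def X2_def
    by (intro sum.cong refl) (simp only: sum.distrib sum_subtractf sum_distrib_left)
  also have "\<dots> = (\<Sum>i<d. p i) * X2 - (\<Sum>i<d. 2 * (p i * L i)) * X1 + (\<Sum>i<d. p i * L i ^ 2) * X0"
    by (simp only: sum.distrib sum_subtractf sum_distrib_right)
  also have "\<dots> = X0 * X2 - (2 * X1) * X1 + X2 * X0"
  proof -
    have f1: "(\<Sum>i<d. 2 * (p i * L i)) = 2 * X1" unfolding X1_def by (simp add: sum_distrib_left)
    show ?thesis unfolding f1 X0_def[symmetric] X2_def[symmetric] ..
  qed
  also have "\<dots> = 2 * (X2 - X1 ^ 2)" using s1 by (simp add: power2_eq_square algebra_simps)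
  also have "X2 - X1 ^ 2 = surprisal_var d p"
    unfolding surprisal_var_def X1_def X2_def L_def by (simp add: sum_negf)
  finally show ?thesis unfolding L_def .
qed

lemma density_prob:
  assumes dr: "density d \<rho>"
  shows "prob_dist d (pp \<rho>)"
proof -
  have r: "\<rho> \<in> carrier_mat d d" by (rule density_carrier[OF dr])
  have "mtrace \<rho> = 1" using dr unfolding density_def by simp
  then have "(\<Sum>i<d. \<rho> $$ (i,i)) = 1" unfolding mtrace_def using r by simp
  then have "(\<Sum>i<d. pp \<rho> i) = 1" unfolding pp_def by (metis Re_sum one_complex.sel)
  moreover have "\<forall>i<d. 0 \<le> pp \<rho> i" unfolding pp_def using density_diag(2)[OF dr] by simp
  ultimately show ?thesis unfolding prob_dist_def by simp
qed

lemma value_bound: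
  assumes h: "hermitian d H" and n: "hs_norm H \<le> 1" and dr: "density d \<rho>"
  shows "(\<Sum>i<d. \<Sum>a<d. ww H \<rho> i a * (Lg \<rho> a - Lg \<rho> i)) \<le> sqrt (2 * surprisal_var d (pp \<rho>))"
proof -
  have H: "H \<in> carrier_mat d d" using h unfolding hermitian_def by auto
  define A where "A = (\<lambda>(i,a). cmod (H $$ (i,a)))"
  define B where "B = (\<lambda>(i,a). sqrt (pp \<rho> i * pp \<rho> a) * \<bar>Lg \<rho> a - Lg \<rho> i\<bar>)"
  define S where "S = {..<d} \<times> {..<d}"
  have pn: "i < d \<Longrightarrow> 0 \<le> pp \<rho> i" for i unfolding pp_def using density_diag(2)[OF dr] by simp
  have "(\<Sum>i<d. \<Sum>a<d. ww H \<rho> i a * (Lg \<rho> a - Lg \<rho> i)) \<le> (\<Sum>i<d. \<Sum>a<d. A (i,a) * B (i,a))"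
  proof (intro sum_mono)
    fix i a assume i: "i \<in> {..<d}" and a: "a \<in> {..<d}"
    have "(cmod (\<rho> $$ (a,i)))^2 \<le> Re (\<rho> $$ (a,a)) * Re (\<rho> $$ (i,i))"
      using density_offdiag[OF dr] i a by simp
    then have c: "cmod (\<rho> $$ (a,i)) \<le> sqrt (pp \<rho> i * pp \<rho> a)"
      unfolding pp_def by (simp add: real_le_rsqrt mult.commute)
    have "ww H \<rho> i a * (Lg \<rho> a - Lg \<rho> i) \<le> \<bar>ww H \<rho> i a\<bar> * \<bar>Lg \<rho> a - Lg \<rho> i\<bar>"
      by (simp add: abs_mult[symmetric])
    also have "\<bar>ww H \<rho> i a\<bar> \<le> cmod (H $$ (i,a)) * cmod (\<rho> $$ (a,i))"
      unfolding ww_def by (metis abs_Im_le_cmod norm_mult)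
    also have "\<dots> \<le> cmod (H $$ (i,a)) * sqrt (pp \<rho> i * pp \<rho> a)"
      by (intro mult_left_mono c) simp
    finally show "ww H \<rho> i a * (Lg \<rho> a - Lg \<rho> i) \<le> A (i,a) * B (i,a)"
      unfolding A_def B_def by (simp add: mult_right_mono mult.assoc)
  qed
  also have "\<dots> = (\<Sum>x\<in>S. A x * B x)"
    unfolding S_def by (simp add: sum.cartesian_product)
  also have "\<dots> \<le> sqrt (\<Sum>x\<in>S. (B x)^2)"
  proof -
    have cs: "(\<Sum>x\<in>S. A x * B x)^2 \<le> (\<Sum>x\<in>S. (A x)^2) * (\<Sum>x\<in>S. (B x)^2)"
      by (rule Cauchy_Schwarz_ineq_sum)
    have "(\<Sum>x\<in>S. (A x)^2) = (\<Sum>i<d. \<Sum>a<d. (cmod (H $$ (i,a)))^2)"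
      unfolding S_def A_def by (simp add: sum.cartesian_product)
    then have a1: "(\<Sum>x\<in>S. (A x)^2) \<le> 1" using hs_sum_le[OF H n] by simp
    have b0: "0 \<le> (\<Sum>x\<in>S. (B x)^2)" by (intro sum_nonneg) simp
    have "(\<Sum>x\<in>S. A x * B x)^2 \<le> (\<Sum>x\<in>S. (B x)^2)"
      using cs mult_right_mono[OF a1 b0] by simp
    then show ?thesis by (rule real_le_rsqrt)
  qed
  also have "(\<Sum>x\<in>S. (B x)^2) = (\<Sum>i<d. \<Sum>a<d. pp \<rho> i * pp \<rho> a * (log 2 (pp \<rho> a) - log 2 (pp \<rho> i))^2)"
  proof -
    have "(B (i,a))^2 = pp \<rho> i * pp \<rho> a * (log 2 (pp \<rho> a) - log 2 (pp \<rho> i))^2"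
      if "i < d" "a < d" for i a
    proof -
      have "0 \<le> pp \<rho> i * pp \<rho> a" using pn that by simp
      then show ?thesis unfolding B_def Lg_def by (simp add: power_mult_distrib)
    qed
    note bx = this
    have "(\<Sum>x\<in>S. (B x)^2) = (\<Sum>x\<in>S. case x of (i,a) \<Rightarrow> pp \<rho> i * pp \<rho> a * (log 2 (pp \<rho> a) - log 2 (pp \<rho> i))^2)"
    proof (rule sum.cong[OF refl])
      fix x assume "x \<in> S"
      then obtain i a where x: "x = (i,a)" "i < d" "a < d" unfolding S_def by auto
      show "(B x)^2 = (case x of (i,a) \<Rightarrow> pp \<rho> i * pp \<rho> a * (log 2 (pp \<rho> a) - log 2 (pp \<rho> i))^2)"
        unfolding x(1) using bx[OF x(2,3)] by simp
    qed
    then show ?thesis unfolding S_def by (simp add: sum.cartesian_product)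
  qed
  also have "\<dots> = 2 * surprisal_var d (pp \<rho>)" by (rule var_identity[OF density_prob[OF dr]])
  finally show ?thesis .
qed


definition phi1 :: "real \<Rightarrow> real" where "phi1 x = x * (- log 2 x)"
definition phi2 :: "real \<Rightarrow> real" where "phi2 x = x * (- log 2 x)^2"

lemma phi1_cont: "continuous_on {0..1} phi1"
proof (rule continuous_on_IccI)
  show "(phi1 \<longlongrightarrow> phi1 0) (at_right 0)" unfolding phi1_def by simp real_asymp
  show "(phi1 \<longlongrightarrow> phi1 1) (at_left 1)" unfolding phi1_def by (intro tendsto_intros) auto
  show "phi1 \<midarrow>x\<rightarrow> phi1 x" if "0 < x" "x < 1" for x
    unfolding phi1_def using that by (intro tendsto_intros) auto
qed simp

lemma phi2_cont: "continuous_on {0..1} phi2"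
proof (rule continuous_on_IccI)
  show "(phi2 \<longlongrightarrow> phi2 0) (at_right 0)" unfolding phi2_def by simp real_asymp
  show "(phi2 \<longlongrightarrow> phi2 1) (at_left 1)" unfolding phi2_def by (intro tendsto_intros) auto
  show "phi2 \<midarrow>x\<rightarrow> phi2 x" if "0 < x" "x < 1" for x
    unfolding phi2_def using that by (intro tendsto_intros) auto
qed simp

definition KK :: "nat \<Rightarrow> (nat \<Rightarrow> real) set" where
  "KK d = {p. (\<forall>i<d. 0 \<le> p i \<and> p i \<le> 1) \<and> (\<forall>i. d \<le> i \<longrightarrow> p i = 0) \<and> (\<Sum>i<d. p i) = 1}"

lemma KK_compact: "compact (KK d)"
proof -
  define S where "S = (\<lambda>i::nat. if i < d then {0..1::real} else {0})"
  have "compactin (product_topology (\<lambda>i. euclidean) UNIV) (PiE UNIV S)"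
    unfolding compactin_PiE S_def by auto
  then have c: "compact (PiE UNIV S)"
    by (simp add: euclidean_product_topology)
  have cl: "closed {p :: nat \<Rightarrow> real. (\<Sum>i<d. p i) = 1}"
    by (intro closed_Collect_eq continuous_intros continuous_on_sum) 
       (auto intro: continuous_on_product_coordinates)
  have "KK d = PiE UNIV S \<inter> {p. (\<Sum>i<d. p i) = 1}"
  proof (rule equalityI)
    show "KK d \<subseteq> PiE UNIV S \<inter> {p. (\<Sum>i<d. p i) = 1}"
    proof
      fix p assume "p \<in> KK d"
      then show "p \<in> PiE UNIV S \<inter> {p. (\<Sum>i<d. p i) = 1}"
        unfolding KK_def S_def PiE_iff by auto
    qed
    show "PiE UNIV S \<inter> {p. (\<Sum>i<d. p i) = 1} \<subseteq> KK d"
    proof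
      fix p assume a: "p \<in> PiE UNIV S \<inter> {p. (\<Sum>i<d. p i) = 1}"
      then have "p i \<in> S i" for i unfolding PiE_iff by blast
      then have "(\<forall>i<d. 0 \<le> p i \<and> p i \<le> 1) \<and> (\<forall>i. d \<le> i \<longrightarrow> p i = 0)"
        unfolding S_def by (metis atLeastAtMost_iff not_le singletonD)
      then show "p \<in> KK d" using a unfolding KK_def by auto
    qed
  qed
  then show ?thesis using c cl by auto
qed

lemma KK_cont: "continuous_on (KK d) (surprisal_var d)"
proof -
  have coord: "continuous_on (KK d) (\<lambda>p. p i)" for i
    by (rule continuous_on_subset[OF continuous_on_product_coordinates]) simp
  have img: "(\<lambda>p. p i) ` KK d \<subseteq> {0..1}" if "i < d" for i
    using that unfolding KK_def by force
  have c1: "continuous_on (KK d) (\<lambda>p. phi1 (p i))" if "i < d" for i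
    by (rule continuous_on_compose2[OF phi1_cont coord img[OF that]])
  have c2: "continuous_on (KK d) (\<lambda>p. phi2 (p i))" if "i < d" for i
    by (rule continuous_on_compose2[OF phi2_cont coord img[OF that]])
  have "continuous_on (KK d) (\<lambda>p. (\<Sum>i<d. phi2 (p i)) - (\<Sum>i<d. phi1 (p i))^2)"
    using c1 c2 by (intro continuous_intros continuous_on_sum) auto
  moreover have "surprisal_var d p = (\<Sum>i<d. phi2 (p i)) - (\<Sum>i<d. phi1 (p i))^2" for p
    unfolding surprisal_var_def phi1_def phi2_def ..
  ultimately show ?thesis by simp
qed

lemma max_exists:
  assumes d: "d \<ge> 1"
  shows "\<exists>p0. prob_dist d p0 \<and> (\<forall>p. prob_dist d p \<longrightarrow> surprisal_var d p \<le> surprisal_var d p0)"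
proof -
  have ne: "KK d \<noteq> {}"
  proof -
    have "(\<lambda>i. if i = 0 then 1 else 0 :: real) \<in> KK d"
      unfolding KK_def using d by (auto simp: sum.delta)
    then show ?thesis by blast
  qed
  obtain p0 where p0: "p0 \<in> KK d" "\<forall>y\<in>KK d. surprisal_var d y \<le> surprisal_var d p0"
    using continuous_attains_sup[OF KK_compact ne KK_cont] by blast
  have pd0: "prob_dist d p0" using p0(1) unfolding KK_def prob_dist_def by auto
  have "surprisal_var d p \<le> surprisal_var d p0" if p: "prob_dist d p" for p
  proof -
    define p' where "p' = (\<lambda>i. if i < d then p i else 0)"
    have "p' \<in> KK d"
    proof -
      have s: "(\<Sum>i<d. p' i) = 1" using p unfolding p'_def prob_dist_def by simp
      have le1: "p i \<le> 1" if "i < d" for i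
      proof -
        have "p i \<le> (\<Sum>j<d. p j)"
          using p that unfolding prob_dist_def by (intro member_le_sum) auto
        then show ?thesis using p unfolding prob_dist_def by simp
      qed
      show ?thesis unfolding KK_def using s le1 p unfolding prob_dist_def p'_def by auto
    qed
    then have "surprisal_var d p' \<le> surprisal_var d p0" using p0(2) by blast
    moreover have "surprisal_var d p' = surprisal_var d p"
      unfolding surprisal_var_def p'_def by simp
    ultimately show ?thesis by simp
  qed
  then show ?thesis using pd0 by blast
qed


lemma hs_norm_smult:
  assumes X: "X \<in> carrier_mat d d"
  shows "hs_norm (complex_of_real c \<cdot>\<^sub>m X) = \<bar>c\<bar> * hs_norm X"
proof -
  have cX: "complex_of_real c \<cdot>\<^sub>m X \<in> carrier_mat d d" using X by simp
  have "(\<Sum>i<d. \<Sum>k<d. (cmod ((complex_of_real c \<cdot>\<^sub>m X) $$ (k,i)))^2)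
      = c^2 * (\<Sum>i<d. \<Sum>k<d. (cmod (X $$ (k,i)))^2)"
    using X by (simp add: sum_distrib_left norm_mult power_mult_distrib)
  then show ?thesis unfolding hs_norm_formula[OF cX] hs_norm_formula[OF X]
    by (simp add: real_sqrt_mult)
qed

lemma density_scaled_id:
  assumes d: "d \<ge> 1"
  shows "density d (complex_of_real (1 / real d) \<cdot>\<^sub>m 1\<^sub>m d)"
proof -
  define \<rho> where "\<rho> = complex_of_real (1 / real d) \<cdot>\<^sub>m 1\<^sub>m d"
  have r: "\<rho> \<in> carrier_mat d d" unfolding \<rho>_def by simp
  have herm: "hermitian d \<rho>"
    unfolding hermitian_def adj_def \<rho>_def by (auto intro!: eq_matI)
  have psd: "0 \<le> Re (conjugate v \<bullet> (\<rho> *\<^sub>v v))" if v: "v \<in> carrier_vec d" for v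
  proof -
    have "conjugate v \<bullet> (\<rho> *\<^sub>v v) = (\<Sum>i<d. cnj (v $ i) * (\<Sum>j<d. \<rho> $$ (i,j) * v $ j))"
      by (rule quad_form[OF r v])
    also have "\<dots> = (\<Sum>i<d. complex_of_real (1 / real d) * (cnj (v $ i) * v $ i))"
    proof (intro sum.cong refl)
      fix i assume i: "i \<in> {..<d}"
      have "(\<Sum>j<d. \<rho> $$ (i,j) * v $ j) = (\<Sum>j<d. if i = j then complex_of_real (1 / real d) * v $ j else 0)"
        unfolding \<rho>_def using i by (intro sum.cong refl) auto
      also have "\<dots> = complex_of_real (1 / real d) * v $ i" using i by (simp add: sum.delta)
      finally show "cnj (v $ i) * (\<Sum>j<d. \<rho> $$ (i,j) * v $ j) = complex_of_real (1 / real d) * (cnj (v $ i) * v $ i)"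
        by simp
    qed
    finally have "Re (conjugate v \<bullet> (\<rho> *\<^sub>v v)) = (\<Sum>i<d. (1 / real d) * ((Re (v $ i))^2 + (Im (v $ i))^2))"
      by (simp add: Re_sum power2_eq_square)
    also have "\<dots> \<ge> 0" by (intro sum_nonneg) simp
    finally show ?thesis .
  qed
  have tr: "mtrace \<rho> = 1"
    unfolding mtrace_def \<rho>_def using d by simp
  show ?thesis unfolding density_def using herm psd tr \<rho>_def by blast
qed

lemma evolve_scaled_id:
  assumes H: "H \<in> carrier_mat d d"
  shows "evolve H t (c \<cdot>\<^sub>m 1\<^sub>m d) = c \<cdot>\<^sub>m 1\<^sub>m d"
proof -
  have U: "Um d H t \<in> carrier_mat d d" and V: "Vm d H t \<in> carrier_mat d d"
    unfolding Um_def Vm_def by simp_all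
  have "evolve H t (c \<cdot>\<^sub>m 1\<^sub>m d) = Um d H t * (c \<cdot>\<^sub>m 1\<^sub>m d) * Vm d H t"
    by (rule evolve_UV[OF H])
  also have "Um d H t * (c \<cdot>\<^sub>m 1\<^sub>m d) = c \<cdot>\<^sub>m Um d H t"
    using mult_smult_distrib[OF U one_carrier_mat, of c] right_mult_one_mat[OF U] by simp
  also have "(c \<cdot>\<^sub>m Um d H t) * Vm d H t = c \<cdot>\<^sub>m (Um d H t * Vm d H t)"
    by (rule mult_smult_assoc_mat[OF U V])
  also have "\<dots> = c \<cdot>\<^sub>m 1\<^sub>m d" using UV_inv[OF H] by simp
  finally show ?thesis .
qed

lemma Cgen_set_nonempty:
  assumes h: "hermitian d H" and d: "d \<ge> 1"
  shows "0 \<in> {D. \<exists>\<rho>. density d \<rho> \<and> ((\<lambda>t. rel_coh (evolve H t \<rho>)) has_real_derivative D) (at 0)}"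
proof -
  have H: "H \<in> carrier_mat d d" using h unfolding hermitian_def by auto
  define \<rho> where "\<rho> = complex_of_real (1 / real d) \<cdot>\<^sub>m 1\<^sub>m d"
  have "(\<lambda>t. rel_coh (evolve H t \<rho>)) = (\<lambda>t. rel_coh \<rho>)"
    unfolding \<rho>_def by (simp add: evolve_scaled_id[OF H])
  then have "((\<lambda>t. rel_coh (evolve H t \<rho>)) has_real_derivative 0) (at 0)" by simp
  then show ?thesis using density_scaled_id[OF d] \<rho>_def by blast
qed


locale witness =
  fixes d :: nat and p0 :: "nat \<Rightarrow> real"
  assumes pd: "prob_dist d p0"
begin

definition s :: "nat \<Rightarrow> real" where "s i = sqrt (p0 i)"
definition L :: "nat \<Rightarrow> real" where "L i = log 2 (p0 i)"
definition rho0 :: "complex mat" where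
  "rho0 = mat d d (\<lambda>(i,j). complex_of_real (s i * s j))"
definition X0 :: "complex mat" where
  "X0 = mat d d (\<lambda>(i,j). \<i> * complex_of_real (s i * s j * (L j - L i)))"
definition N :: real where "N = hs_norm X0"
definition H0 :: "complex mat" where "H0 = complex_of_real (1 / N) \<cdot>\<^sub>m X0"
definition Sw :: real where "Sw = (\<Sum>i<d. \<Sum>a<d. p0 i * p0 a * (L a - L i)^2)"

lemma p_nonneg: "i < d \<Longrightarrow> 0 \<le> p0 i" using pd unfolding prob_dist_def by auto

lemma ss: "i < d \<Longrightarrow> s i * s i = p0 i" unfolding s_def using p_nonneg by simp

lemma rho_carrier: "rho0 \<in> carrier_mat d d" unfolding rho0_def by simp
lemma X_carrier: "X0 \<in> carrier_mat d d" unfolding X0_def by simp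
lemma H_carrier: "H0 \<in> carrier_mat d d" unfolding H0_def using X_carrier by simp

lemma rho_density: "density d rho0"
proof -
  have herm: "hermitian d rho0"
    unfolding hermitian_def adj_def rho0_def by (auto intro!: eq_matI simp: mult.commute)
  have psd: "0 \<le> Re (conjugate v \<bullet> (rho0 *\<^sub>v v))" if v: "v \<in> carrier_vec d" for v
  proof -
    define w where "w = (\<Sum>j<d. complex_of_real (s j) * v $ j)"
    have "conjugate v \<bullet> (rho0 *\<^sub>v v) = (\<Sum>i<d. cnj (v $ i) * (\<Sum>j<d. rho0 $$ (i,j) * v $ j))"
      by (rule quad_form[OF rho_carrier v])
    also have "\<dots> = (\<Sum>i<d. cnj (v $ i) * (complex_of_real (s i) * w))"
    proof (intro sum.cong refl arg_cong2[where f = "(*)"])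
      fix i assume i: "i \<in> {..<d}"
      have "(\<Sum>j<d. rho0 $$ (i,j) * v $ j) = (\<Sum>j<d. complex_of_real (s i) * (complex_of_real (s j) * v $ j))"
        unfolding rho0_def using i by (intro sum.cong refl) auto
      also have "\<dots> = complex_of_real (s i) * w" unfolding w_def by (simp add: sum_distrib_left)
      finally show "(\<Sum>j<d. rho0 $$ (i,j) * v $ j) = complex_of_real (s i) * w" .
    qed
    also have "\<dots> = (\<Sum>i<d. cnj (v $ i) * complex_of_real (s i)) * w"
      by (simp add: sum_distrib_right mult.assoc)
    also have "(\<Sum>i<d. cnj (v $ i) * complex_of_real (s i)) = cnj w"
      unfolding w_def by (simp add: cnj_sum mult.commute)
    finally have e: "conjugate v \<bullet> (rho0 *\<^sub>v v) = cnj w * w" .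
    show ?thesis unfolding e Re_cnj_mult_self by simp
  qed
  have "mtrace rho0 = (\<Sum>i<d. complex_of_real (p0 i))"
  proof -
    have "complex_of_real (s i * s i) = complex_of_real (p0 i)" if "i < d" for i using ss[OF that] by simp
    then show ?thesis unfolding mtrace_def rho0_def by (intro sum.cong refl) auto
  qed
  also have "\<dots> = 1" using pd unfolding prob_dist_def by (simp flip: of_real_sum)
  finally have tr: "mtrace rho0 = 1" .
  show ?thesis unfolding density_def using herm psd tr by blast
qed

lemma pp_rho: "i < d \<Longrightarrow> pp rho0 i = p0 i"
  unfolding pp_def rho0_def by (simp add: ss)

lemma Lg_rho: "i < d \<Longrightarrow> Lg rho0 i = L i"
  unfolding Lg_def L_def by (simp add: pp_rho)

lemma H0_entry: "i < d \<Longrightarrow> j < d \<Longrightarrow> H0 $$ (i,j) = complex_of_real (1 / N) * (\<i> * complex_of_real (s i * s j * (L j - L i)))"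
  unfolding H0_def X0_def by simp

lemma H0_herm: "hermitian d H0"
proof -
  have "adj H0 = H0"
  proof (rule eq_matI)
    fix i j assume ij: "i < dim_row H0" "j < dim_col H0"
    then have ij': "i < d" "j < d" using H_carrier by auto
    show "adj H0 $$ (i,j) = H0 $$ (i,j)"
      unfolding adj_def using ij' H_carrier by (simp add: H0_entry algebra_simps)
  qed (use H_carrier in \<open>auto simp: adj_def\<close>)
  then show ?thesis unfolding hermitian_def using H_carrier by simp
qed

lemma N_eq: "N = sqrt Sw"
proof -
  have "N = sqrt (\<Sum>i<d. \<Sum>k<d. (cmod (X0 $$ (k,i)))^2)"
    unfolding N_def by (rule hs_norm_formula[OF X_carrier])
  also have "(\<Sum>i<d. \<Sum>k<d. (cmod (X0 $$ (k,i)))^2) = (\<Sum>i<d. \<Sum>k<d. p0 k * p0 i * (L i - L k)^2)"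
  proof (intro sum.cong refl)
    fix i k assume i: "i \<in> {..<d}" and k: "k \<in> {..<d}"
    have cm: "cmod (\<i> * complex_of_real r) = \<bar>r\<bar>" for r by (simp add: norm_mult)
    have "X0 $$ (k,i) = \<i> * complex_of_real (s k * s i * (L i - L k))"
      unfolding X0_def using i k by simp
    then have "cmod (X0 $$ (k,i)) = \<bar>s k * s i * (L i - L k)\<bar>" by (simp only: cm)
    then have "(cmod (X0 $$ (k,i)))^2 = (s k * s i * (L i - L k))^2" by simp
    also have "\<dots> = (s k * s k) * (s i * s i) * (L i - L k)^2" by (simp add: power2_eq_square)
    also have "\<dots> = p0 k * p0 i * (L i - L k)^2" using i k by (simp add: ss)
    finally show "(cmod (X0 $$ (k,i)))^2 = p0 k * p0 i * (L i - L k)^2" .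
  qed
  also have "\<dots> = Sw" unfolding Sw_def by (rule sum.swap)
  finally show ?thesis .
qed

lemma Sw_nonneg: "0 \<le> Sw" unfolding Sw_def by (auto intro!: sum_nonneg mult_nonneg_nonneg simp: p_nonneg)

lemma H0_norm: "hs_norm H0 \<le> 1"
proof -
  have N0: "0 \<le> N" unfolding N_eq using Sw_nonneg by simp
  have "hs_norm H0 = \<bar>1 / N\<bar> * N" unfolding H0_def N_def by (rule hs_norm_smult[OF X_carrier])
  then show ?thesis using N0 by (cases "N = 0") auto
qed

lemma H0_zero: "i < d \<Longrightarrow> a < d \<Longrightarrow> pp rho0 i = 0 \<Longrightarrow> H0 $$ (i,a) = 0 \<and> H0 $$ (a,i) = 0"
  using pp_rho by (simp add: H0_entry s_def)

lemma ww_H0: "i < d \<Longrightarrow> a < d \<Longrightarrow> ww H0 rho0 i a = (1 / N) * (p0 i * p0 a * (L a - L i))"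
proof -
  assume i: "i < d" and a: "a < d"
  have "ww H0 rho0 i a = Im (complex_of_real (1 / N) * (\<i> * complex_of_real (s i * s a * (L a - L i))) * complex_of_real (s a * s i))"
    unfolding ww_def using i a by (simp add: H0_entry rho0_def)
  also have "\<dots> = (1 / N) * ((s i * s i) * (s a * s a) * (L a - L i))"
    by (simp add: algebra_simps)
  finally show ?thesis using i a by (simp add: ss)
qed

lemma witness_value:
  "sqrt (2 * surprisal_var d p0) \<in> {D. \<exists>\<rho>. density d \<rho> \<and> ((\<lambda>t. rel_coh (evolve H0 t \<rho>)) has_real_derivative D) (at 0)}"
proof -
  interpret dc: deco d H0 rho0 by (rule deco.intro[OF H0_herm rho_density])
  obtain D where D: "((\<lambda>t. rel_coh (evolve H0 t rho0)) has_real_derivative D) (at 0)"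
    using dc.deriv_exists H0_zero by blast
  have "D = (\<Sum>i<d. \<Sum>a<d. ww H0 rho0 i a * (Lg rho0 a - Lg rho0 i))" by (rule dc.deriv_value[OF D])
  also have "\<dots> = (\<Sum>i<d. \<Sum>a<d. (1 / N) * (p0 i * p0 a * (L a - L i)^2))"
    by (intro sum.cong refl) (simp add: ww_H0 Lg_rho power2_eq_square)
  also have "\<dots> = Sw / N" unfolding Sw_def by (simp add: sum_divide_distrib)
  also have "\<dots> = sqrt Sw" unfolding N_eq using Sw_nonneg by (simp add: real_div_sqrt)
  also have "Sw = 2 * surprisal_var d p0"
    unfolding Sw_def L_def by (rule var_identity[OF pd])
  finally show ?thesis using D rho_density by blast
qed

end

theorem theorem1:
  fixes d :: nat
  assumes "d \<ge> 2"
  shows "\<exists>H0 p0. hermitian d H0 \<and> hs_norm H0 \<le> 1 \<and> prob_dist d p0 \<and>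
     (\<forall>H. hermitian d H \<and> hs_norm H \<le> 1 \<longrightarrow> Cgen d H \<le> Cgen d H0) \<and>
     (\<forall>p. prob_dist d p \<longrightarrow> sqrt (2 * surprisal_var d p) \<le> sqrt (2 * surprisal_var d p0)) \<and>
     Cgen d H0 = sqrt (2 * surprisal_var d p0)"
proof -
  have d1: "d \<ge> 1" using assms by simp
  obtain p0 where pd: "prob_dist d p0"
    and pmax: "\<And>p. prob_dist d p \<Longrightarrow> surprisal_var d p \<le> surprisal_var d p0"
    using max_exists[OF d1] by blast
  interpret w: witness d p0 by (rule witness.intro[OF pd])
  define B where "B = sqrt (2 * surprisal_var d p0)"
  define A where "A = (\<lambda>H. {D. \<exists>\<rho>. density d \<rho> \<and> ((\<lambda>t. rel_coh (evolve H t \<rho>)) has_real_derivative D) (at 0)})"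
  have CA: "Cgen d H = Sup (A H)" for H unfolding Cgen_def A_def ..
  have smax: "sqrt (2 * surprisal_var d p) \<le> B" if "prob_dist d p" for p
    unfolding B_def using pmax[OF that] by simp
  have ub: "D \<le> B" if h: "hermitian d H" and n: "hs_norm H \<le> 1" and D: "D \<in> A H" for H D
  proof -
    obtain \<rho> where dr: "density d \<rho>" and Dd: "((\<lambda>t. rel_coh (evolve H t \<rho>)) has_real_derivative D) (at 0)"
      using D unfolding A_def by blast
    have "D = (\<Sum>i<d. \<Sum>a<d. ww H \<rho> i a * (Lg \<rho> a - Lg \<rho> i))"
      by (rule deco.deriv_value[OF deco.intro[OF h dr] Dd])
    also have "\<dots> \<le> sqrt (2 * surprisal_var d (pp \<rho>))" by (rule value_bound[OF h n dr])
    also have "\<dots> \<le> B" by (rule smax[OF density_prob[OF dr]])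
    finally show ?thesis .
  qed
  have BA: "B \<in> A w.H0" unfolding A_def B_def by (rule w.witness_value)
  have C0: "Cgen d w.H0 = B"
    unfolding CA by (rule cSup_eq_maximum[OF BA ub[OF w.H0_herm w.H0_norm]])
  have CH: "Cgen d H \<le> Cgen d w.H0" if "hermitian d H \<and> hs_norm H \<le> 1" for H
  proof -
    have ne: "A H \<noteq> {}" using Cgen_set_nonempty[OF _ d1, of H] that unfolding A_def by blast
    have "Sup (A H) \<le> B" by (rule cSup_least[OF ne]) (use ub that in blast)
    then show ?thesis using C0 CA by simp
  qed
  show ?thesis
    using w.H0_herm w.H0_norm pd CH smax C0 unfolding B_def by blast
qed


end
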